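(* For every $m\in\mathbb{N}$ and $\alpha\in\mathcal{C}_m$, the matrix $W_\alpha$ is congruent to $\Gamma_2\oplus\mathrm{H}_2(-1)^{\oplus (m-2)/2}$ if all $\alpha_i$ are even, and to $1\oplus\mathrm{H}_2(-1)^{\oplus\frac12(m-\#^{\mathsf{odd}}_\alpha)}\oplus 0^{\oplus(\#^{\mathsf{odd}}_\alpha-1)}$ otherwise.
   Context: $\mathcal{C}_m$ is the set of compositions of $m$ (tuples $\alpha=(\alpha_1,\dots,\alpha_N)$ of positive integers summing to $m$); $\#^{\mathsf{odd}}_\alpha$ is the number of odd entries. Let $E^j:[0,1]\to\mathbb{R}^m$, $t\mapsto te_j$; concatenation $(X\star Y)(t)=X(2t)$ for $t<\frac12$, $X(1)+Y(2t-1)$ for $t\ge\frac12$; $\mathsf{Ax}^{\alpha,i}=E^{\alpha_1+\dots+\alpha_{i-1}+1}\star\dots\star E^{\alpha_1+\dots+\alpha_i}$. $\sigma(X)=1\oplus(X(1)-X(0))\oplus\big(\int_{0<t_1<t_2<1}\dot X_a(t_1)\dot X_b(t_2)dt_1dt_2\big)_{a,b}$ is the $2$-truncated signature, in the free nilpotent Lie group $\mathcal{G}_{m,2}=\exp(\mathfrak{g}_{m,2})\subset T_{m,2}=\mathbb{R}\oplus\mathbb{R}^m\oplus\mathbb{R}^{m\times m}$ (truncated tensor product, $\exp(\mathbf{z})=1+\mathbf{z}+\mathbf{z}^{\otimes2}/2$, $\log=\exp^{-1}$). The barycenter of $\mathbf{x}\in\mathcal{G}_{m,2}^N$ is the unique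 $\mathbf{m}$ with $\sum_i\log(\mathbf{m}^{-1}\mathbf{x}_i)=0$, and $W_\alpha\in\mathbb{R}^{m\times m}$ is the level-2 component of $\mathsf{bary}(\sigma(\mathsf{Ax}^{\alpha,1}),\dots,\sigma(\mathsf{Ax}^{\alpha,N}))$. $\Gamma_2=\begin{bmatrix}0&-1\\1&1\end{bmatrix}$, $\mathrm{H}_2(-1)=\begin{bmatrix}0&1\\-1&0\end{bmatrix}$, $\oplus$ is block diagonal sum, $M^{\oplus n}$ the $n$-fold sum, $0^{\oplus n}$ the $n\times n$ zero matrix. Real matrices $M,V$ are congruent if $PMP^\top=V$ for some invertible real $P$. *)

theory Defs
  imports "HOL-Analysis.Analysis" "Jordan_Normal_Form.Matrix"
begin

section \<open>Truncated tensor algebra T_{m,2} = R + R^m + R^{m x m}\<close>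

type_synonym tens = "real \<times> real Matrix.vec \<times> real Matrix.mat"

definition outer :: "nat \<Rightarrow> real Matrix.vec \<Rightarrow> real Matrix.vec \<Rightarrow> real Matrix.mat" where
  "outer m v w = Matrix.mat m m (\<lambda>(i,j). v $ i * w $ j)"

definition tmult :: "nat \<Rightarrow> tens \<Rightarrow> tens \<Rightarrow> tens" where
  "tmult m x y = (case x of (a, v, A) \<Rightarrow> case y of (b, w, B) \<Rightarrow>
     (a * b, a \<cdot>\<^sub>v w + b \<cdot>\<^sub>v v, a \<cdot>\<^sub>m B + b \<cdot>\<^sub>m A + outer m v w))"

definition tadd :: "tens \<Rightarrow> tens \<Rightarrow> tens" where
  "tadd x y = (case x of (a, v, A) \<Rightarrow> case y of (b, w, B) \<Rightarrow> (a + b, v + w, A + B))"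

definition tzero :: "nat \<Rightarrow> tens" where
  "tzero m = (0, 0\<^sub>v m, 0\<^sub>m m m)"

definition tone :: "nat \<Rightarrow> tens" where
  "tone m = (1, 0\<^sub>v m, 0\<^sub>m m m)"

definition tsum :: "nat \<Rightarrow> tens list \<Rightarrow> tens" where
  "tsum m xs = foldr tadd xs (tzero m)"

text \<open>exp(z) = 1 + z + z^2/2 and log(x) = (x-1) - (x-1)^2/2 in the truncated algebra
  (evaluated for elements with the appropriate scalar part).\<close>
definition texp :: "nat \<Rightarrow> tens \<Rightarrow> tens" where
  "texp m z = tadd (tadd (tone m) z) (case tmult m z z of (c, u, C) \<Rightarrow> (c/2, (1/2) \<cdot>\<^sub>v u, (1/2) \<cdot>\<^sub>m C))"

definition tlog :: "nat \<Rightarrow> tens \<Rightarrow> tens" where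
  "tlog m x = (let y = tadd x (case tone m of (c, u, C) \<Rightarrow> (-c, -u, -C)) in
     tadd y (case tmult m y y of (c, u, C) \<Rightarrow> (-c/2, (-1/2) \<cdot>\<^sub>v u, (-1/2) \<cdot>\<^sub>m C)))"

definition tlie :: "nat \<Rightarrow> tens set" where
  "tlie m = {(0, v, A) | v A. v \<in> carrier_vec m \<and> A \<in> carrier_mat m m \<and> transpose_mat A = - A}"

definition tgroup :: "nat \<Rightarrow> tens set" where
  "tgroup m = texp m ` tlie m"

definition tinv :: "nat \<Rightarrow> tens \<Rightarrow> tens" where
  "tinv m x = (THE y. y \<in> tgroup m \<and> tmult m x y = tone m)"

definition bary :: "nat \<Rightarrow> tens list \<Rightarrow> tens" where
  "bary m xs = (THE g. g \<in> tgroup m \<and> tsum m (map (\<lambda>x. tlog m (tmult m (tinv m g) x)) xs) = tzero m)"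

text \<open>Paths [0,1] -> R^m, coordinates indexed 1..m (coordinate k of X t is X t k).\<close>
type_synonym path = "real \<Rightarrow> nat \<Rightarrow> real"

definition sig2 :: "nat \<Rightarrow> path \<Rightarrow> tens" where
  "sig2 m X = (1, Matrix.vec m (\<lambda>i. X 1 (Suc i) - X 0 (Suc i)),
     Matrix.mat m m (\<lambda>(a, b). integral {(s, t). 0 < s \<and> s < t \<and> t < 1}
        (\<lambda>(s, t). vector_derivative (\<lambda>r. X r (Suc a)) (at s) *
                  vector_derivative (\<lambda>r. X r (Suc b)) (at t))))"

definition axis :: "nat \<Rightarrow> path" where
  "axis j = (\<lambda>t k. if k = j then t else 0)"

definition pcat :: "path \<Rightarrow> path \<Rightarrow> path" where
  "pcat X Y = (\<lambda>t. if t < 1/2 then X (2 * t) else (\<lambda>k. X 1 k + Y (2 * t - 1) k))"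

fun pconcat :: "path list \<Rightarrow> path" where
  "pconcat [] = (\<lambda>t k. 0)"
| "pconcat [X] = X"
| "pconcat (X # Xs) = pcat X (pconcat Xs)"

text \<open>Ax^{alpha,i} for 1 <= i <= N (alpha given as a list, alpha_i = alpha ! (i-1)).\<close>
definition Ax :: "nat list \<Rightarrow> nat \<Rightarrow> path" where
  "Ax \<alpha> i = (let s = sum_list (take (i - 1) \<alpha>) in
     pconcat (map axis [s + 1 ..< s + \<alpha> ! (i - 1) + 1]))"

definition W :: "nat list \<Rightarrow> real Matrix.mat" where
  "W \<alpha> = snd (snd (bary (sum_list \<alpha>) (map (\<lambda>i. sig2 (sum_list \<alpha>) (Ax \<alpha> i)) [1 ..< length \<alpha> + 1])))"

definition nodd :: "nat list \<Rightarrow> nat" where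
  "nodd \<alpha> = length (filter odd \<alpha>)"

definition dsum :: "real Matrix.mat \<Rightarrow> real Matrix.mat \<Rightarrow> real Matrix.mat" where
  "dsum A B = four_block_mat A (0\<^sub>m (dim_row A) (dim_col B)) (0\<^sub>m (dim_row B) (dim_col A)) B"

fun dpow :: "real Matrix.mat \<Rightarrow> nat \<Rightarrow> real Matrix.mat" where
  "dpow A 0 = 0\<^sub>m 0 0"
| "dpow A (Suc n) = dsum A (dpow A n)"

definition Gamma2 :: "real Matrix.mat" where
  "Gamma2 = mat_of_rows_list 2 [[0, -1], [1, 1]]"

definition H2m :: "real Matrix.mat" where
  "H2m = mat_of_rows_list 2 [[0, 1], [-1, 0]]"

definition congruent :: "real Matrix.mat \<Rightarrow> real Matrix.mat \<Rightarrow> bool" where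
  "congruent M V \<longleftrightarrow> (\<exists>n P. M \<in> carrier_mat n n \<and> V \<in> carrier_mat n n \<and> P \<in> carrier_mat n n \<and>
      invertible_mat P \<and> P * M * transpose_mat P = V)"

end

theory Submission
  imports Defs
begin


lemma dsum_carrier[simp]:
  "A \<in> carrier_mat a a \<Longrightarrow> B \<in> carrier_mat b b \<Longrightarrow> dsum A B \<in> carrier_mat (a+b) (a+b)"
  unfolding dsum_def by auto

lemma dsum_dims[simp]:
  "dim_row (dsum A B) = dim_row A + dim_row B" "dim_col (dsum A B) = dim_col A + dim_col B"
  unfolding dsum_def by auto

lemma dsum_index:
  assumes "A \<in> carrier_mat a a" "B \<in> carrier_mat b b" "i < a + b" "j < a + b"
  shows "dsum A B $$ (i,j) = (if i < a then (if j < a then A $$ (i,j) else 0)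
     else (if j < a then 0 else B $$ (i - a, j - a)))"
  using assms unfolding dsum_def by auto

lemma dsum_assoc:
  assumes "A \<in> carrier_mat a a" "B \<in> carrier_mat b b" "C \<in> carrier_mat c c"
  shows "dsum (dsum A B) C = dsum A (dsum B C)"
  apply (rule eq_matI)
  using assms by (auto simp: dsum_index[of _ "a+b" _ c] dsum_index[of _ a _ "b+c"] dsum_index[of _ a _ b]
     dsum_index[of _ b _ c])

lemma dsum_empty_left: "dsum (0\<^sub>m 0 0) A = A"
  by (rule eq_matI) (auto simp: dsum_def)

lemma dsum_empty_right: "dsum A (0\<^sub>m 0 0) = A"
  by (rule eq_matI) (auto simp: dsum_def)

lemma dsum_zero: "dsum (0\<^sub>m a a) (0\<^sub>m b b) = 0\<^sub>m (a+b) (a+b)"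
  unfolding dsum_def by simp

lemma dsum_mult:
  assumes "A \<in> carrier_mat a a" "B \<in> carrier_mat b b" "C \<in> carrier_mat a a" "D \<in> carrier_mat b b"
  shows "dsum A B * dsum C D = dsum (A * C) (B * D)"
  unfolding dsum_def using assms
  by (subst mult_four_block_mat[of _ a a _ b _ b]) auto

lemma dsum_transpose:
  assumes "A \<in> carrier_mat a a" "B \<in> carrier_mat b b"
  shows "transpose_mat (dsum A B) = dsum (transpose_mat A) (transpose_mat B)"
  apply (rule eq_matI) using assms by (auto simp: dsum_index)

lemma dsum_one: "dsum (1\<^sub>m a) (1\<^sub>m b) = 1\<^sub>m (a+b)"
  unfolding dsum_def by simp

section \<open>Congruence\<close>

lemma invertible_intro:
  assumes "P \<in> carrier_mat n n" "Q \<in> carrier_mat n n" "P * Q = 1\<^sub>m n" "Q * P = 1\<^sub>m n"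
  shows "invertible_mat P"
  using assms unfolding invertible_mat_def inverts_mat_def square_mat.simps by auto

lemma invertible_elim:
  assumes "invertible_mat P" "P \<in> carrier_mat n n"
  obtains Q where "Q \<in> carrier_mat n n" "P * Q = 1\<^sub>m n" "Q * P = 1\<^sub>m n"
proof -
  obtain Q where Q: "P * Q = 1\<^sub>m (dim_row P)" "Q * P = 1\<^sub>m (dim_row Q)"
    using assms unfolding invertible_mat_def inverts_mat_def by auto
  have "dim_col Q = n" using Q(1) assms(2) by (metis carrier_matD(1) index_mult_mat(3) index_one_mat(3))
  moreover have "dim_row Q = n" using Q(2) assms(2) by (metis carrier_matD(2) index_mult_mat(3) index_one_mat(3))
  ultimately show ?thesis using that Q assms(2) by auto
qed


lemma invertible_mult:
  assumes "invertible_mat P" "invertible_mat R" "P \<in> carrier_mat n n" "R \<in> carrier_mat n n"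
  shows "invertible_mat (P * R)"
proof -
  obtain Q where Q: "Q \<in> carrier_mat n n" "P * Q = 1\<^sub>m n" "Q * P = 1\<^sub>m n"
    using invertible_elim[OF assms(1,3)] by blast
  obtain S where S: "S \<in> carrier_mat n n" "R * S = 1\<^sub>m n" "S * R = 1\<^sub>m n"
    using invertible_elim[OF assms(2,4)] by blast
  have a1: "(P*R)*(S*Q) = P*(R*(S*Q))" using assoc_mult_mat[of P n n R n "S*Q" n] assms Q S by auto
  have a2: "R*(S*Q) = (R*S)*Q" using assoc_mult_mat[of R n n S n Q n] assms Q S by auto
  have 1: "(P * R) * (S * Q) = 1\<^sub>m n" unfolding a1 a2 using S Q assms by simp
  have b1: "(S*Q)*(P*R) = S*(Q*(P*R))" using assoc_mult_mat[of S n n Q n "P*R" n] assms Q S by auto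
  have b2: "Q*(P*R) = (Q*P)*R" using assoc_mult_mat[of Q n n P n R n] assms Q S by auto
  have 2: "(S * Q) * (P * R) = 1\<^sub>m n" unfolding b1 b2 using S Q assms by simp
  show ?thesis by (rule invertible_intro[OF _ _ 1 2]) (use assms Q S in auto)
qed

lemma invertible_one: "invertible_mat (1\<^sub>m n)"
  by (rule invertible_intro[of _ n "1\<^sub>m n"]) auto

lemma congruentI:
  assumes "M \<in> carrier_mat n n" "P \<in> carrier_mat n n" "invertible_mat P" "P * M * transpose_mat P = V"
  shows "congruent M V"
  unfolding congruent_def using assms by (intro exI[of _ n] exI[of _ P]) auto

lemma congruent_carrier:
  assumes "congruent M V" "M \<in> carrier_mat n n"
  shows "V \<in> carrier_mat n n"
  using assms unfolding congruent_def by auto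

lemma congruent_refl: "M \<in> carrier_mat n n \<Longrightarrow> congruent M M"
  by (rule congruentI[of _ n "1\<^sub>m n"]) (auto simp: invertible_one)

lemma congruent_trans:
  assumes "congruent A B" "congruent B C"
  shows "congruent A C"
proof -
  obtain n P where 1: "A \<in> carrier_mat n n" "B \<in> carrier_mat n n" "P \<in> carrier_mat n n"
    "invertible_mat P" "P * A * transpose_mat P = B"
    using assms(1) unfolding congruent_def by auto
  obtain n' R where 2: "B \<in> carrier_mat n' n'" "C \<in> carrier_mat n' n'" "R \<in> carrier_mat n' n'"
    "invertible_mat R" "R * B * transpose_mat R = C"
    using assms(2) unfolding congruent_def by auto
  have nn: "n' = n" using 1 2 by auto
  have tr: "transpose_mat (R * P) = transpose_mat P * transpose_mat R"
    using transpose_mult[of R n n P n] 1 2 nn by auto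
  have e1: "(R * P) * A = R * (P * A)" using assoc_mult_mat[of R n n P n A n] 1 2 nn by auto
  have e2: "R * (P * A) * (transpose_mat P * transpose_mat R) = R * ((P * A) * transpose_mat P) * transpose_mat R"
    using assoc_mult_mat[of "R * (P * A)" n n "transpose_mat P" n "transpose_mat R" n]
      assoc_mult_mat[of R n n "P * A" n "transpose_mat P" n] 1 2 nn by auto
  have "(R * P) * A * transpose_mat (R * P) = C"
    unfolding tr e1 e2 using 1 2 by simp
  then show ?thesis
    using 1 2 nn by (intro congruentI[of _ n "R * P"]) (auto intro: invertible_mult)
qed
lemma invertible_dsum:
  assumes "invertible_mat P" "invertible_mat R" "P \<in> carrier_mat a a" "R \<in> carrier_mat b b"
  shows "invertible_mat (dsum P R)"
proof -
  obtain Q where Q: "Q \<in> carrier_mat a a" "P * Q = 1\<^sub>m a" "Q * P = 1\<^sub>m a"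
    using invertible_elim[OF assms(1,3)] by blast
  obtain S where S: "S \<in> carrier_mat b b" "R * S = 1\<^sub>m b" "S * R = 1\<^sub>m b"
    using invertible_elim[OF assms(2,4)] by blast
  have 1: "dsum P R * dsum Q S = 1\<^sub>m (a+b)"
    using dsum_mult[of P a R b Q S] assms Q S dsum_one[of a b] by simp
  have 2: "dsum Q S * dsum P R = 1\<^sub>m (a+b)"
    using dsum_mult[of Q a S b P R] assms Q S dsum_one[of a b] by simp
  show ?thesis
    by (rule invertible_intro[OF _ _ 1 2]) (use assms Q S in auto)
qed

lemma congruent_dsum:
  assumes "congruent A A'" "congruent B B'"
  shows "congruent (dsum A B) (dsum A' B')"
proof -
  obtain n P where 1: "A \<in> carrier_mat n n" "A' \<in> carrier_mat n n" "P \<in> carrier_mat n n"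
    "invertible_mat P" "P * A * transpose_mat P = A'"
    using assms(1) unfolding congruent_def by auto
  obtain n' R where 2: "B \<in> carrier_mat n' n'" "B' \<in> carrier_mat n' n'" "R \<in> carrier_mat n' n'"
    "invertible_mat R" "R * B * transpose_mat R = B'"
    using assms(2) unfolding congruent_def by auto
  have "dsum P R * dsum A B * transpose_mat (dsum P R) = dsum A' B'"
    using 1 2 dsum_transpose[of P n R n'] dsum_mult[of P n R n' A B] 
      dsum_mult[of "P * A" n "R * B" n' "transpose_mat P" "transpose_mat R"] by simp
  then show ?thesis
    using 1 2 by (intro congruentI[of _ "n+n'" "dsum P R"]) (auto simp: invertible_dsum)
qed

lemma congruent_dsum_left:
  "congruent A A' \<Longrightarrow> B \<in> carrier_mat b b \<Longrightarrow> congruent (dsum B A) (dsum B A')"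
  using congruent_dsum congruent_refl by blast

definition swapm :: "nat \<Rightarrow> nat \<Rightarrow> real mat" where
  "swapm a b = four_block_mat (0\<^sub>m b a) (1\<^sub>m b) (1\<^sub>m a) (0\<^sub>m a b)"

lemma swapm_carrier: "swapm a b \<in> carrier_mat (a+b) (a+b)"
  unfolding swapm_def by (metis add.commute four_block_carrier_mat one_carrier_mat zero_carrier_mat)

lemma swapm_t: "transpose_mat (swapm a b) = swapm b a"
  unfolding swapm_def by (rule eq_matI) auto

lemma swapm_inv: "swapm a b * swapm b a = 1\<^sub>m (a+b)"
proof -
  have "swapm a b * swapm b a = four_block_mat (0\<^sub>m b a * 0\<^sub>m a b + 1\<^sub>m b * 1\<^sub>m b) (0\<^sub>m b a * 1\<^sub>m a + 1\<^sub>m b * 0\<^sub>m b a)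
    (1\<^sub>m a * 0\<^sub>m a b + 0\<^sub>m a b * 1\<^sub>m b) (1\<^sub>m a * 1\<^sub>m a + 0\<^sub>m a b * 0\<^sub>m b a)"
    unfolding swapm_def
    by (rule mult_four_block_mat[of _ b a _ b _ a _ _ b _ a]) auto
  also have "\<dots> = four_block_mat (1\<^sub>m b) (0\<^sub>m b a) (0\<^sub>m a b) (1\<^sub>m a)" by simp
  also have "\<dots> = 1\<^sub>m (a+b)" by (simp add: add.commute)
  finally show ?thesis .
qed

lemma congruent_comm:
  assumes A: "A \<in> carrier_mat a a" and B: "B \<in> carrier_mat b b"
  shows "congruent (dsum A B) (dsum B A)"
proof -
  have inv: "invertible_mat (swapm a b)"
    by (rule invertible_intro[of _ "a+b" "swapm b a"]) (use swapm_inv[of a b] swapm_inv[of b a] swapm_carrier[of a b] swapm_carrier[of b a] in \<open>auto simp: add.commute\<close>)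
  have d: "dsum A B = four_block_mat A (0\<^sub>m a b) (0\<^sub>m b a) B" "dsum B A = four_block_mat B (0\<^sub>m b a) (0\<^sub>m a b) A"
    unfolding dsum_def using A B by auto
  have "swapm a b * dsum A B = four_block_mat (0\<^sub>m b a * A + 1\<^sub>m b * 0\<^sub>m b a) (0\<^sub>m b a * 0\<^sub>m a b + 1\<^sub>m b * B)
     (1\<^sub>m a * A + 0\<^sub>m a b * 0\<^sub>m b a) (1\<^sub>m a * 0\<^sub>m a b + 0\<^sub>m a b * B)"
    unfolding swapm_def d by (rule mult_four_block_mat[of _ b a _ b _ a _ _ a _ b]) (use A B in auto)
  also have "\<dots> = four_block_mat (0\<^sub>m b a) B A (0\<^sub>m a b)" using A B by simp
  finally have s1: "swapm a b * dsum A B = four_block_mat (0\<^sub>m b a) B A (0\<^sub>m a b)" .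
  have "four_block_mat (0\<^sub>m b a) B A (0\<^sub>m a b) * swapm b a = 
     four_block_mat (0\<^sub>m b a * 0\<^sub>m a b + B * 1\<^sub>m b) (0\<^sub>m b a * 1\<^sub>m a + B * 0\<^sub>m b a)
       (A * 0\<^sub>m a b + 0\<^sub>m a b * 1\<^sub>m b) (A * 1\<^sub>m a + 0\<^sub>m a b * 0\<^sub>m b a)"
    unfolding swapm_def by (rule mult_four_block_mat[of _ b a _ b _ a _ _ b _ a]) (use A B in auto)
  also have "\<dots> = dsum B A" unfolding d using A B by simp
  finally have "swapm a b * dsum A B * transpose_mat (swapm a b) = dsum B A"
    unfolding s1 swapm_t .
  then show ?thesis using A B inv swapm_carrier[of a b]
    by (intro congruentI[of _ "a+b" "swapm a b"]) auto
qed


lemma outer_carrier[simp]: "outer n u v \<in> carrier_mat n n"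
  unfolding outer_def by auto

lemma outer_dims[simp]: "dim_row (outer n u v) = n" "dim_col (outer n u v) = n"
  unfolding outer_def by auto

lemma outer_index[simp]: "i < n \<Longrightarrow> j < n \<Longrightarrow> outer n u v $$ (i,j) = u $ i * v $ j"
  unfolding outer_def by auto

lemma outer_transform:
  assumes P: "P \<in> carrier_mat n n" and u: "u \<in> carrier_vec n"
  shows "P * outer n u u * transpose_mat P = outer n (P *\<^sub>v u) (P *\<^sub>v u)"
proof (rule eq_matI)
  fix i j assume i: "i < dim_row (outer n (P *\<^sub>v u) (P *\<^sub>v u))" and j: "j < dim_col (outer n (P *\<^sub>v u) (P *\<^sub>v u))"
  then have i: "i < n" and j: "j < n" by simp_all
  have 1: "(P * outer n u u) $$ (i,k) = (P *\<^sub>v u) $ i * u $ k" if k: "k < n" for k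
    using P u i k by (auto simp: scalar_prod_def sum_distrib_right mult.assoc)
  have "(P * outer n u u * transpose_mat P) $$ (i,j) = (\<Sum>k<n. (P * outer n u u) $$ (i,k) * P $$ (j,k))"
    using P i j by (auto simp: scalar_prod_def lessThan_atLeast0)
  also have "\<dots> = (\<Sum>k<n. (P *\<^sub>v u) $ i * u $ k * P $$ (j,k))"
    using 1 by auto
  also have "\<dots> = (P *\<^sub>v u) $ i * (P *\<^sub>v u) $ j"
    using P u j by (auto simp: scalar_prod_def sum_distrib_left lessThan_atLeast0 mult_ac)
  finally show "(P * outer n u u * transpose_mat P) $$ (i,j) = outer n (P *\<^sub>v u) (P *\<^sub>v u) $$ (i,j)"
    using i j by simp
qed (use P in auto)

lemma rank1_transform:
  assumes P: "P \<in> carrier_mat n n" and A: "A \<in> carrier_mat n n" and u: "u \<in> carrier_vec n"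
  shows "P * (A + outer n u u) * transpose_mat P = P * A * transpose_mat P + outer n (P *\<^sub>v u) (P *\<^sub>v u)"
proof -
  have "P * (A + outer n u u) * transpose_mat P = (P * A + P * outer n u u) * transpose_mat P"
    using mult_add_distrib_mat[of P n n A n "outer n u u"] P A by simp
  also have "\<dots> = P * A * transpose_mat P + P * outer n u u * transpose_mat P"
    using add_mult_distrib_mat[of "P * A" n n "P * outer n u u" "transpose_mat P" n] P A by simp
  finally show ?thesis using outer_transform[OF P u] by simp
qed

lemma dsum_outer:
  assumes A: "A \<in> carrier_mat a a" and B: "B \<in> carrier_mat r r" and v: "v \<in> carrier_vec r"
  shows "dsum A (B + outer r v v) = dsum A B + outer (a+r) (0\<^sub>v a @\<^sub>v v) (0\<^sub>v a @\<^sub>v v)"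
  apply (rule eq_matI)
  using A B v by (auto simp: dsum_index[of _ a _ r])

definition vc :: "real \<Rightarrow> nat \<Rightarrow> real vec" where "vc c n = vec n (\<lambda>_. c)"

lemma vc_carrier[simp]: "vc c n \<in> carrier_vec n" unfolding vc_def by auto
lemma vc_append: "vc c (a + b) = vc c a @\<^sub>v vc c b"
  unfolding vc_def by (rule eq_vecI) auto

lemma reduce_generic:
  assumes A: "A \<in> carrier_mat s s" and B: "B \<in> carrier_mat r r" and Z: "Z \<in> carrier_mat z z"
    and X: "X \<in> carrier_mat x x" and s: "s = z + x" and Q: "Q \<in> carrier_mat s s" and Qi: "invertible_mat Q"
    and QA: "Q * A * transpose_mat Q = dsum Z X" and Qv: "Q *\<^sub>v vc c s = 0\<^sub>v z @\<^sub>v vc c x"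
  shows "congruent (dsum A B + outer (s+r) (vc c (s+r)) (vc c (s+r)))
                   (dsum Z (dsum X B + outer (x+r) (vc c (x+r)) (vc c (x+r))))"
proof -
  let ?P = "dsum Q (1\<^sub>m r)"
  have P: "?P \<in> carrier_mat (s+r) (s+r)" using Q by simp
  have Pi: "invertible_mat ?P" using Q Qi by (intro invertible_dsum[of _ _ s r]) (auto simp: invertible_one)
  have 1: "?P * dsum A B * transpose_mat ?P = dsum (dsum Z X) B"
    using dsum_transpose[of Q s "1\<^sub>m r" r] dsum_mult[of Q s "1\<^sub>m r" r A B] 
      dsum_mult[of "Q * A" s "1\<^sub>m r * B" r "transpose_mat Q" "transpose_mat (1\<^sub>m r)"] A B Q QA by simp
  have 2: "?P *\<^sub>v vc c (s+r) = 0\<^sub>v z @\<^sub>v vc c (x + r)"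
  proof -
    have "?P *\<^sub>v vc c (s+r) = (Q *\<^sub>v vc c s) @\<^sub>v (1\<^sub>m r *\<^sub>v vc c r)"
      unfolding vc_append dsum_def using Q mult_mat_vec_split[of Q s "1\<^sub>m r" r "vc c s" "vc c r"] by simp
    also have "\<dots> = 0\<^sub>v z @\<^sub>v vc c (x + r)" unfolding Qv vc_append
      by (rule eq_vecI) auto
    finally show ?thesis .
  qed
  have "?P * (dsum A B + outer (s+r) (vc c (s+r)) (vc c (s+r))) * transpose_mat ?P
     = dsum (dsum Z X) B + outer (s+r) (0\<^sub>v z @\<^sub>v vc c (x + r)) (0\<^sub>v z @\<^sub>v vc c (x + r))"
    using rank1_transform[OF P _ vc_carrier, of "dsum A B" c] A B 1 2 by simp
  also have "\<dots> = dsum Z (dsum X B + outer (x+r) (vc c (x+r)) (vc c (x+r)))"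
    using dsum_outer[of Z z "dsum X B" "x+r" "vc c (x+r)"] dsum_assoc[OF Z X B] X B Z s
    by (simp add: add.assoc)
  finally show ?thesis using A B P Pi by (intro congruentI[of _ "s+r" ?P]) auto
qed



lemma sum_split_at: "(\<Sum>l\<in>{0..<(s::nat)+r}. f l) = (\<Sum>l\<in>{0..<s}. f l) + (\<Sum>l\<in>{s..<s+r}. f l)"
  using sum.atLeastLessThan_concat[where m=0 and n=s and p="s+r" and g=f] by simp

lemma front_mult_left:
  assumes Q: "Q \<in> carrier_mat s s" and M: "M \<in> carrier_mat (s+r) n" and i: "i < s + r" and j: "j < n"
  shows "(dsum Q (1\<^sub>m r) * M) $$ (i,j) = (if i < s then (\<Sum>l\<in>{0..<s}. Q $$ (i,l) * M $$ (l,j)) else M $$ (i,j))"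
proof -
  have "(dsum Q (1\<^sub>m r) * M) $$ (i,j) = (\<Sum>l\<in>{0..<s+r}. dsum Q (1\<^sub>m r) $$ (i,l) * M $$ (l,j))"
    using Q M i j by (simp add: scalar_prod_def)
  also have "\<dots> = (\<Sum>l\<in>{0..<s}. dsum Q (1\<^sub>m r) $$ (i,l) * M $$ (l,j)) + (\<Sum>l\<in>{s..<s+r}. dsum Q (1\<^sub>m r) $$ (i,l) * M $$ (l,j))"
    by (rule sum_split_at)
  also have "\<dots> = (if i < s then (\<Sum>l\<in>{0..<s}. Q $$ (i,l) * M $$ (l,j)) else M $$ (i,j))"
  proof (cases "i < s")
    case True
    have "(\<Sum>l\<in>{s..<s+r}. dsum Q (1\<^sub>m r) $$ (i,l) * M $$ (l,j)) = 0"
      using Q i True by (intro sum.neutral) (auto simp: dsum_index[of _ s _ r])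
    moreover have "(\<Sum>l\<in>{0..<s}. dsum Q (1\<^sub>m r) $$ (i,l) * M $$ (l,j)) = (\<Sum>l\<in>{0..<s}. Q $$ (i,l) * M $$ (l,j))"
      using Q i True by (intro sum.cong) (auto simp: dsum_index[of _ s _ r])
    ultimately show ?thesis using True by simp
  next
    case False
    have "(\<Sum>l\<in>{0..<s}. dsum Q (1\<^sub>m r) $$ (i,l) * M $$ (l,j)) = 0"
      using Q i False by (intro sum.neutral) (auto simp: dsum_index[of _ s _ r])
    moreover have "(\<Sum>l\<in>{s..<s+r}. dsum Q (1\<^sub>m r) $$ (i,l) * M $$ (l,j)) = (\<Sum>l\<in>{s..<s+r}. if l = i then M $$ (l,j) else 0)"
      using Q i False by (intro sum.cong) (auto simp: dsum_index[of _ s _ r])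
    moreover have "\<dots> = M $$ (i,j)" using i False by simp
    ultimately show ?thesis using False by simp
  qed
  finally show ?thesis .
qed

lemma front_mult_right:
  assumes Q: "Q \<in> carrier_mat s s" and M: "M \<in> carrier_mat n (s+r)" and i: "i < n" and j: "j < s + r"
  shows "(M * transpose_mat (dsum Q (1\<^sub>m r))) $$ (i,j) = (if j < s then (\<Sum>l\<in>{0..<s}. M $$ (i,l) * Q $$ (j,l)) else M $$ (i,j))"
proof -
  have "(M * transpose_mat (dsum Q (1\<^sub>m r))) $$ (i,j) = (dsum Q (1\<^sub>m r) * transpose_mat M) $$ (j,i)"
    using Q M i j by (simp add: scalar_prod_def mult.commute)
  also have "\<dots> = (if j < s then (\<Sum>l\<in>{0..<s}. Q $$ (j,l) * transpose_mat M $$ (l,i)) else transpose_mat M $$ (j,i))"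
    by (rule front_mult_left) (use Q M i j in auto)
  also have "\<dots> = (if j < s then (\<Sum>l\<in>{0..<s}. M $$ (i,l) * Q $$ (j,l)) else M $$ (i,j))"
    using M i j by (auto simp: mult.commute intro!: sum.cong)
  finally show ?thesis .
qed

lemma front_conj:
  assumes Q: "Q \<in> carrier_mat s s" and M: "M \<in> carrier_mat (s+r) (s+r)" and i: "i < s + r" and j: "j < s + r"
  shows "(dsum Q (1\<^sub>m r) * M * transpose_mat (dsum Q (1\<^sub>m r))) $$ (i,j) =
    (if i < s then (if j < s then (\<Sum>l'\<in>{0..<s}. \<Sum>l\<in>{0..<s}. Q $$ (i,l) * M $$ (l,l') * Q $$ (j,l'))
                    else (\<Sum>l\<in>{0..<s}. Q $$ (i,l) * M $$ (l,j)))
     else (if j < s then (\<Sum>l'\<in>{0..<s}. M $$ (i,l') * Q $$ (j,l')) else M $$ (i,j)))"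
proof -
  have PM: "dsum Q (1\<^sub>m r) * M \<in> carrier_mat (s+r) (s+r)"
    by (rule mult_carrier_mat[OF dsum_carrier[OF Q one_carrier_mat] M])
  have L: "\<And>l. l < s + r \<Longrightarrow> (dsum Q (1\<^sub>m r) * M) $$ (i,l) = (if i < s then (\<Sum>l'\<in>{0..<s}. Q $$ (i,l') * M $$ (l',l)) else M $$ (i,l))"
    using front_mult_left[OF Q M i] M by auto
  show ?thesis
    unfolding front_mult_right[OF Q PM i j]
    using Q M i j by (auto simp: L sum_distrib_right sum_distrib_left mult.assoc simp del: index_mult_mat intro!: sum.cong)
qed

lemma front_vec:
  assumes Q: "Q \<in> carrier_mat s s" and v: "v \<in> carrier_vec (s+r)" and i: "i < s + r"
  shows "(dsum Q (1\<^sub>m r) *\<^sub>v v) $ i = (if i < s then (\<Sum>l\<in>{0..<s}. Q $$ (i,l) * v $ l) else v $ i)"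
proof -
  have "(dsum Q (1\<^sub>m r) *\<^sub>v v) $ i = (dsum Q (1\<^sub>m r) * mat_of_cols (s+r) [v]) $$ (i,0)"
    using Q v i by (simp add: scalar_prod_def mat_of_cols_def)
  also have "\<dots> = (if i < s then (\<Sum>l\<in>{0..<s}. Q $$ (i,l) * v $ l) else v $ i)"
    using front_mult_left[OF Q _ i, of "mat_of_cols (s+r) [v]" 1] Q v i
    by (auto simp: mat_of_cols_def intro!: sum.cong)
  finally show ?thesis .
qed



definition Tm :: "nat \<Rightarrow> real mat" where
  "Tm k = mat k k (\<lambda>(i,j). if i < j then 1 else if j < i then -1 else 0)"

lemma Tm_carrier[simp]: "Tm k \<in> carrier_mat k k" unfolding Tm_def by auto
lemma Tm_dims[simp]: "dim_row (Tm k) = k" "dim_col (Tm k) = k" unfolding Tm_def by auto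
lemma Tm_index[simp]: "i < k \<Longrightarrow> j < k \<Longrightarrow> Tm k $$ (i,j) = (if i < j then 1 else if j < i then -1 else 0)"
  unfolding Tm_def by auto

lemma H2m_carrier[simp]: "H2m \<in> carrier_mat 2 2" unfolding H2m_def by (auto simp: mat_of_rows_list_def)
lemma H2m_dims[simp]: "dim_row H2m = 2" "dim_col H2m = 2" unfolding H2m_def by (auto simp: mat_of_rows_list_def)
lemma H2m_index: "i < 2 \<Longrightarrow> j < 2 \<Longrightarrow> H2m $$ (i,j) = (if i = 0 \<and> j = 1 then 1 else if i = 1 \<and> j = 0 then -1 else 0)"
  unfolding H2m_def mat_of_rows_list_def by (auto simp: less_2_cases_iff)

lemma lt3_cases: "(i::nat) < 3 \<longleftrightarrow> i = 0 \<or> i = 1 \<or> i = 2" by auto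
lemma lt4_cases: "(i::nat) < 4 \<longleftrightarrow> i = 0 \<or> i = 1 \<or> i = 2 \<or> i = 3" by auto
lemma upt3: "{0..<3::nat} = {0,1,2}" by auto
lemma upt4: "{0..<4::nat} = {0,1,2,3}" by auto
lemma upt2: "{0..<2::nat} = {0,1}" by auto

definition Q3 :: "real mat" where "Q3 = mat_of_rows_list 3 [[1,-1,0],[0,1,-1],[1,-1,1]]"
definition R3 :: "real mat" where "R3 = mat_of_rows_list 3 [[0,1,1],[-1,1,1],[-1,0,1]]"

lemma Q3_carrier[simp]: "Q3 \<in> carrier_mat 3 3" unfolding Q3_def by (auto simp: mat_of_rows_list_def)
lemma R3_carrier[simp]: "R3 \<in> carrier_mat 3 3" unfolding R3_def by (auto simp: mat_of_rows_list_def)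

lemma Q3_dims[simp]: "dim_row Q3 = 3" "dim_col Q3 = 3" unfolding Q3_def by (auto simp: mat_of_rows_list_def)
lemma Q3_inv: "invertible_mat Q3"
proof -
  have 1: "Q3 * R3 = 1\<^sub>m 3"
    by (rule eq_matI) (auto simp: Q3_def R3_def mat_of_rows_list_def scalar_prod_def upt3 lt3_cases)
  have 2: "R3 * Q3 = 1\<^sub>m 3"
    by (rule eq_matI) (auto simp: Q3_def R3_def mat_of_rows_list_def scalar_prod_def upt3 lt3_cases)
  show ?thesis by (rule invertible_intro[OF Q3_carrier R3_carrier 1 2])
qed

lemma Q3_index: "i < 3 \<Longrightarrow> j < 3 \<Longrightarrow> Q3 $$ (i,j) = [[1,-1,0],[0,1,-1],[1,-1,1::real]] ! i ! j"
  unfolding Q3_def mat_of_rows_list_def by auto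

lemma reduce_T:
  "dsum Q3 (1\<^sub>m r) * Tm (3+r) * transpose_mat (dsum Q3 (1\<^sub>m r)) = dsum H2m (Tm (1+r))"
proof (rule eq_matI)
  fix i j assume "i < dim_row (dsum H2m (Tm (1 + r)))" "j < dim_col (dsum H2m (Tm (1 + r)))"
  then have i: "i < 3 + r" and j: "j < 3 + r" by auto
  have e: "(dsum Q3 (1\<^sub>m r) * Tm (3+r) * transpose_mat (dsum Q3 (1\<^sub>m r))) $$ (i,j) = 
    (if i < 3 then (if j < 3 then (\<Sum>l'\<in>{0..<3}. \<Sum>l\<in>{0..<3}. Q3 $$ (i,l) * Tm (3+r) $$ (l,l') * Q3 $$ (j,l'))
                    else (\<Sum>l\<in>{0..<3}. Q3 $$ (i,l) * Tm (3+r) $$ (l,j)))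
     else (if j < 3 then (\<Sum>l'\<in>{0..<3}. Tm (3+r) $$ (i,l') * Q3 $$ (j,l')) else Tm (3+r) $$ (i,j)))"
    by (rule front_conj[OF Q3_carrier _ i j]) simp
  have d: "dsum H2m (Tm (1 + r)) $$ (i,j) = (if i < 2 then (if j < 2 then H2m $$ (i,j) else 0)
     else (if j < 2 then 0 else Tm (1+r) $$ (i - 2, j - 2)))"
    by (rule dsum_index) (use i j in auto)
  show "(dsum Q3 (1\<^sub>m r) * Tm (3+r) * transpose_mat (dsum Q3 (1\<^sub>m r))) $$ (i,j) = dsum H2m (Tm (1 + r)) $$ (i,j)"
  proof (cases "i < 3"; cases "j < 3")
    assume "i < 3" "j < 3"
    then show ?thesis unfolding e d using i j by (auto simp: lt3_cases upt3 Q3_index H2m_index)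
  next
    assume "i < 3" "\<not> j < 3"
    then show ?thesis unfolding e d using i j by (auto simp: lt3_cases upt3 Q3_index H2m_index)
  next
    assume "\<not> i < 3" "j < 3"
    then show ?thesis unfolding e d using i j by (auto simp: lt3_cases upt3 Q3_index H2m_index)
  next
    assume "\<not> i < 3" "\<not> j < 3"
    then show ?thesis unfolding e d using i j by (auto simp: H2m_index)
  qed
qed (auto)

lemma reduce_T_vec:
  "dsum Q3 (1\<^sub>m r) *\<^sub>v vc c (3+r) = 0\<^sub>v 2 @\<^sub>v vc c (1+r)"
proof (rule eq_vecI)
  fix i assume "i < dim_vec (0\<^sub>v 2 @\<^sub>v vc c (1 + r))"
  then have i: "i < 3 + r" by (simp add: vc_def)
  show "(dsum Q3 (1\<^sub>m r) *\<^sub>v vc c (3+r)) $ i = (0\<^sub>v 2 @\<^sub>v vc c (1 + r)) $ i"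
    unfolding front_vec[OF Q3_carrier vc_carrier i]
    using i by (auto simp: lt3_cases upt3 Q3_index vc_def)
qed (simp add: vc_def)



definition Qc :: "real mat" where "Qc = mat_of_rows_list 2 [[1,-1],[0,1]]"
definition Rc :: "real mat" where "Rc = mat_of_rows_list 2 [[1,1],[0,1]]"
definition Qd :: "real mat" where "Qd = mat_of_rows_list 3 [[1,-1,0],[0,1,-1],[0,0,1]]"
definition Rd :: "real mat" where "Rd = mat_of_rows_list 3 [[1,1,1],[0,1,1],[0,0,1]]"
definition Qe :: "real mat" where "Qe = mat_of_rows_list 4 [[1,-1,0,0],[0,1,0,-1],[1,-1,1,0],[0,0,0,1]]"
definition Re :: "real mat" where "Re = mat_of_rows_list 4 [[1,1,0,1],[0,1,0,1],[-1,0,1,0],[0,0,0,1]]"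

lemma QR_carrier[simp]: "Qc \<in> carrier_mat 2 2" "Rc \<in> carrier_mat 2 2" "Qd \<in> carrier_mat 3 3" "Rd \<in> carrier_mat 3 3"
  "Qe \<in> carrier_mat 4 4" "Re \<in> carrier_mat 4 4"
  unfolding Qc_def Rc_def Qd_def Rd_def Qe_def Re_def by (auto simp: mat_of_rows_list_def)

lemma Qc_inv: "invertible_mat Qc"
proof -
  have 1: "Qc * Rc = 1\<^sub>m 2"
    by (rule eq_matI) (auto simp: Qc_def Rc_def mat_of_rows_list_def scalar_prod_def upt2 less_2_cases_iff)
  have 2: "Rc * Qc = 1\<^sub>m 2"
    by (rule eq_matI) (auto simp: Qc_def Rc_def mat_of_rows_list_def scalar_prod_def upt2 less_2_cases_iff)
  show ?thesis by (rule invertible_intro[OF _ _ 1 2]) auto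
qed

lemma Qd_inv: "invertible_mat Qd"
proof -
  have 1: "Qd * Rd = 1\<^sub>m 3"
    by (rule eq_matI) (auto simp: Qd_def Rd_def mat_of_rows_list_def scalar_prod_def upt3 lt3_cases)
  have 2: "Rd * Qd = 1\<^sub>m 3"
    by (rule eq_matI) (auto simp: Qd_def Rd_def mat_of_rows_list_def scalar_prod_def upt3 lt3_cases)
  show ?thesis by (rule invertible_intro[OF _ _ 1 2]) auto
qed

lemma Qe_inv: "invertible_mat Qe"
proof -
  have 1: "Qe * Re = 1\<^sub>m 4"
    by (rule eq_matI) (auto simp: Qe_def Re_def mat_of_rows_list_def scalar_prod_def upt4 lt4_cases)
  have 2: "Re * Qe = 1\<^sub>m 4"
    by (rule eq_matI) (auto simp: Qe_def Re_def mat_of_rows_list_def scalar_prod_def upt4 lt4_cases)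
  show ?thesis by (rule invertible_intro[OF _ _ 1 2]) auto
qed

lemma Qc_conj: "Qc * dsum (Tm 1) (Tm 1) * transpose_mat Qc = dsum (0\<^sub>m 1 1) (Tm 1)"
  by (rule eq_matI) (auto simp: Qc_def mat_of_rows_list_def scalar_prod_def upt2 less_2_cases_iff dsum_index[of _ 1 _ 1])

lemma Qd_conj: "Qd * dsum (Tm 2) (Tm 1) * transpose_mat Qd = dsum H2m (Tm 1)"
  by (rule eq_matI) (auto simp: Qd_def mat_of_rows_list_def scalar_prod_def upt3 lt3_cases dsum_index[of _ 2 _ 1] H2m_index)

lemma Qe_conj: "Qe * dsum (Tm 2) (Tm 2) * transpose_mat Qe = dsum H2m (Tm 2)"
  by (rule eq_matI) (auto simp: Qe_def mat_of_rows_list_def scalar_prod_def upt4 lt4_cases dsum_index[of _ 2 _ 2] H2m_index)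

lemma Qc_vec: "Qc *\<^sub>v vc c 2 = 0\<^sub>v 1 @\<^sub>v vc c 1"
  by (rule eq_vecI) (auto simp: Qc_def mat_of_rows_list_def scalar_prod_def upt2 less_2_cases_iff vc_def)
lemma Qd_vec: "Qd *\<^sub>v vc c 3 = 0\<^sub>v 2 @\<^sub>v vc c 1"
  by (rule eq_vecI) (auto simp: Qd_def mat_of_rows_list_def scalar_prod_def upt3 lt3_cases vc_def)
lemma Qe_vec: "Qe *\<^sub>v vc c 4 = 0\<^sub>v 2 @\<^sub>v vc c 2"
  by (rule eq_vecI) (auto simp: Qe_def mat_of_rows_list_def scalar_prod_def upt4 lt4_cases vc_def)



fun Kmat :: "nat list \<Rightarrow> real mat" where
  "Kmat [] = 0\<^sub>m 0 0"
| "Kmat (k # \<beta>) = dsum (Tm k) (Kmat \<beta>)"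

lemma Kmat_carrier[simp]: "Kmat \<alpha> \<in> carrier_mat (sum_list \<alpha>) (sum_list \<alpha>)"
  by (induction \<alpha>) auto

definition Mc :: "real \<Rightarrow> nat list \<Rightarrow> real mat" where
  "Mc c \<alpha> = Kmat \<alpha> + outer (sum_list \<alpha>) (vc c (sum_list \<alpha>)) (vc c (sum_list \<alpha>))"

lemma Mc_carrier[simp]: "Mc c \<alpha> \<in> carrier_mat (sum_list \<alpha>) (sum_list \<alpha>)"
  unfolding Mc_def by simp

lemma Mc_cons: "Mc c (k # \<beta>) = dsum (Tm k) (Kmat \<beta>) + outer (k + sum_list \<beta>) (vc c (k + sum_list \<beta>)) (vc c (k + sum_list \<beta>))"
  unfolding Mc_def by simp

lemma Mc_cons2: "Mc c (a # b # \<gamma>) = dsum (dsum (Tm a) (Tm b)) (Kmat \<gamma>) + outer ((a + b) + sum_list \<gamma>) (vc c ((a + b) + sum_list \<gamma>)) (vc c ((a + b) + sum_list \<gamma>))"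
  unfolding Mc_def by (simp add: dsum_assoc[of _ a _ b _ "sum_list \<gamma>"] add.assoc)

lemma red_a:
  assumes "k \<ge> 3"
  shows "congruent (Mc c (k # \<beta>)) (dsum H2m (Mc c ((k - 2) # \<beta>)))"
proof -
  obtain r where k: "k = 3 + r" using assms by (metis add.commute le_Suc_ex)
  have "congruent (dsum (Tm (3+r)) (Kmat \<beta>) + outer ((3+r) + sum_list \<beta>) (vc c ((3+r) + sum_list \<beta>)) (vc c ((3+r) + sum_list \<beta>)))
    (dsum H2m (dsum (Tm (1+r)) (Kmat \<beta>) + outer ((1+r) + sum_list \<beta>) (vc c ((1+r) + sum_list \<beta>)) (vc c ((1+r) + sum_list \<beta>))))"
    by (rule reduce_generic[OF Tm_carrier Kmat_carrier H2m_carrier Tm_carrier _ _ _ reduce_T reduce_T_vec])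
      (auto intro!: invertible_dsum Q3_inv invertible_one)
  moreover have "k - 2 = 1 + r" using k by simp
  ultimately show ?thesis unfolding Mc_cons k by simp
qed

lemma red_c: "congruent (Mc c (1 # 1 # \<gamma>)) (dsum (0\<^sub>m 1 1) (Mc c (1 # \<gamma>)))"
proof -
  have "congruent (dsum (dsum (Tm 1) (Tm 1)) (Kmat \<gamma>) + outer ((1 + 1) + sum_list \<gamma>) (vc c ((1 + 1) + sum_list \<gamma>)) (vc c ((1 + 1) + sum_list \<gamma>)))
    (dsum (0\<^sub>m 1 1) (dsum (Tm 1) (Kmat \<gamma>) + outer (1 + sum_list \<gamma>) (vc c (1 + sum_list \<gamma>)) (vc c (1 + sum_list \<gamma>))))"
  proof -
    have q: "Qc \<in> carrier_mat (1+1) (1+1)" using QR_carrier(1) by (metis one_add_one)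
    have qv: "Qc *\<^sub>v vc c (1+1) = 0\<^sub>v 1 @\<^sub>v vc c 1" using Qc_vec by (metis one_add_one)
    show ?thesis
      by (rule reduce_generic[OF dsum_carrier[OF Tm_carrier Tm_carrier] Kmat_carrier zero_carrier_mat Tm_carrier refl q Qc_inv Qc_conj qv])
  qed
  then show ?thesis unfolding Mc_cons2 Mc_cons[of c 1 \<gamma>] .
qed

lemma red_d: "congruent (Mc c (2 # 1 # \<gamma>)) (dsum H2m (Mc c (1 # \<gamma>)))"
proof -
  have "congruent (dsum (dsum (Tm 2) (Tm 1)) (Kmat \<gamma>) + outer ((2 + 1) + sum_list \<gamma>) (vc c ((2 + 1) + sum_list \<gamma>)) (vc c ((2 + 1) + sum_list \<gamma>)))
    (dsum H2m (dsum (Tm 1) (Kmat \<gamma>) + outer (1 + sum_list \<gamma>) (vc c (1 + sum_list \<gamma>)) (vc c (1 + sum_list \<gamma>))))"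
  proof -
    have q: "Qd \<in> carrier_mat (2+1) (2+1)" by simp
    have qv: "Qd *\<^sub>v vc c (2+1) = 0\<^sub>v 2 @\<^sub>v vc c 1" using Qd_vec by simp
    show ?thesis
      by (rule reduce_generic[OF dsum_carrier[OF Tm_carrier Tm_carrier] Kmat_carrier H2m_carrier Tm_carrier refl q Qd_inv Qd_conj qv])
  qed
  then show ?thesis unfolding Mc_cons2 Mc_cons[of c 1 \<gamma>] .
qed

lemma red_e: "congruent (Mc c (2 # 2 # \<gamma>)) (dsum H2m (Mc c (2 # \<gamma>)))"
proof -
  have "congruent (dsum (dsum (Tm 2) (Tm 2)) (Kmat \<gamma>) + outer ((2 + 2) + sum_list \<gamma>) (vc c ((2 + 2) + sum_list \<gamma>)) (vc c ((2 + 2) + sum_list \<gamma>)))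
    (dsum H2m (dsum (Tm 2) (Kmat \<gamma>) + outer (2 + sum_list \<gamma>) (vc c (2 + sum_list \<gamma>)) (vc c (2 + sum_list \<gamma>))))"
  proof -
    have q: "Qe \<in> carrier_mat (2+2) (2+2)" by simp
    have qv: "Qe *\<^sub>v vc c (2+2) = 0\<^sub>v 2 @\<^sub>v vc c 2" using Qe_vec by simp
    show ?thesis
      by (rule reduce_generic[OF dsum_carrier[OF Tm_carrier Tm_carrier] Kmat_carrier H2m_carrier Tm_carrier refl q Qe_inv Qe_conj qv])
  qed
  then show ?thesis unfolding Mc_cons2 Mc_cons[of c 2 \<gamma>] .
qed

lemma swapm_conj:
  assumes A: "A \<in> carrier_mat a a" and B: "B \<in> carrier_mat b b"
  shows "swapm a b * dsum A B * transpose_mat (swapm a b) = dsum B A"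
proof -
  have d: "dsum A B = four_block_mat A (0\<^sub>m a b) (0\<^sub>m b a) B" "dsum B A = four_block_mat B (0\<^sub>m b a) (0\<^sub>m a b) A"
    unfolding dsum_def using A B by auto
  have "swapm a b * dsum A B = four_block_mat (0\<^sub>m b a * A + 1\<^sub>m b * 0\<^sub>m b a) (0\<^sub>m b a * 0\<^sub>m a b + 1\<^sub>m b * B)
     (1\<^sub>m a * A + 0\<^sub>m a b * 0\<^sub>m b a) (1\<^sub>m a * 0\<^sub>m a b + 0\<^sub>m a b * B)"
    unfolding swapm_def d by (rule mult_four_block_mat[of _ b a _ b _ a _ _ a _ b]) (use A B in auto)
  also have "\<dots> = four_block_mat (0\<^sub>m b a) B A (0\<^sub>m a b)" using A B by simp
  finally have s1: "swapm a b * dsum A B = four_block_mat (0\<^sub>m b a) B A (0\<^sub>m a b)" .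
  have "four_block_mat (0\<^sub>m b a) B A (0\<^sub>m a b) * swapm b a = 
     four_block_mat (0\<^sub>m b a * 0\<^sub>m a b + B * 1\<^sub>m b) (0\<^sub>m b a * 1\<^sub>m a + B * 0\<^sub>m b a)
       (A * 0\<^sub>m a b + 0\<^sub>m a b * 1\<^sub>m b) (A * 1\<^sub>m a + 0\<^sub>m a b * 0\<^sub>m b a)"
    unfolding swapm_def by (rule mult_four_block_mat[of _ b a _ b _ a _ _ b _ a]) (use A B in auto)
  also have "\<dots> = dsum B A" unfolding d using A B by simp
  finally show ?thesis unfolding s1 swapm_t .
qed

lemma swapm_vec: "swapm a b *\<^sub>v vc c (a + b) = 0\<^sub>v 0 @\<^sub>v vc c (b + a)"
proof -
  have "swapm a b *\<^sub>v (vc c a @\<^sub>v vc c b) = (0\<^sub>m b a *\<^sub>v vc c a + 1\<^sub>m b *\<^sub>v vc c b) @\<^sub>v (1\<^sub>m a *\<^sub>v vc c a + 0\<^sub>m a b *\<^sub>v vc c b)"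
    unfolding swapm_def by (rule four_block_mat_mult_vec) auto
  also have "\<dots> = 0\<^sub>v 0 @\<^sub>v vc c (b + a)"
    by (rule eq_vecI) (auto simp: vc_def)
  finally show ?thesis unfolding vc_append .
qed

lemma red_swap: "congruent (Mc c (a # b # \<gamma>)) (Mc c (b # a # \<gamma>))"
proof -
  have "congruent (dsum (dsum (Tm a) (Tm b)) (Kmat \<gamma>) + outer ((a + b) + sum_list \<gamma>) (vc c ((a + b) + sum_list \<gamma>)) (vc c ((a + b) + sum_list \<gamma>)))
    (dsum (0\<^sub>m 0 0) (dsum (dsum (Tm b) (Tm a)) (Kmat \<gamma>) + outer ((b + a) + sum_list \<gamma>) (vc c ((b + a) + sum_list \<gamma>)) (vc c ((b + a) + sum_list \<gamma>))))"
    by (rule reduce_generic[OF _ Kmat_carrier _ _ _ swapm_carrier _ _ swapm_vec])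
     (use swapm_carrier[of b a] in \<open>auto simp: swapm_conj dsum_empty_left swapm_inv swapm_carrier add.commute intro!: invertible_intro[of _ "a+b" "swapm b a"]\<close>)
  then show ?thesis unfolding Mc_cons2 dsum_empty_left by simp
qed



lemma dpow_carrier[simp]: "dpow H2m r \<in> carrier_mat (2*r) (2*r)"
  by (induction r) auto

lemma Gamma2_carrier[simp]: "Gamma2 \<in> carrier_mat 2 2" unfolding Gamma2_def by (auto simp: mat_of_rows_list_def)

definition NFe :: "nat \<Rightarrow> real mat" where "NFe r = dsum Gamma2 (dpow H2m r)"
definition NFo :: "nat \<Rightarrow> nat \<Rightarrow> real mat" where "NFo r s = dsum (1\<^sub>m 1) (dsum (dpow H2m r) (0\<^sub>m s s))"

lemma step_He:
  assumes "congruent X (NFe r)"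
  shows "congruent (dsum H2m X) (NFe (Suc r))"
proof -
  have "congruent (dsum H2m X) (dsum H2m (NFe r))"
    by (rule congruent_dsum_left[OF assms H2m_carrier])
  also have "dsum H2m (NFe r) = dsum (dsum H2m Gamma2) (dpow H2m r)"
    unfolding NFe_def by (rule dsum_assoc[of H2m 2 Gamma2 2 "dpow H2m r" "2*r", symmetric]) auto
  finally have 1: "congruent (dsum H2m X) (dsum (dsum H2m Gamma2) (dpow H2m r))" .
  have 2: "congruent (dsum (dsum H2m Gamma2) (dpow H2m r)) (dsum (dsum Gamma2 H2m) (dpow H2m r))"
    by (rule congruent_dsum[OF congruent_comm[OF H2m_carrier Gamma2_carrier] congruent_refl[OF dpow_carrier]])
  have 3: "dsum (dsum Gamma2 H2m) (dpow H2m r) = NFe (Suc r)"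
    unfolding NFe_def by (simp add: dsum_assoc[of _ 2 _ 2 _ "2*r"])
  show ?thesis using congruent_trans[OF 1 2] 3 by simp
qed

lemma step_Ho:
  assumes "congruent X (NFo r s)"
  shows "congruent (dsum H2m X) (NFo (Suc r) s)"
proof -
  have "congruent (dsum H2m X) (dsum H2m (NFo r s))"
    by (rule congruent_dsum_left[OF assms H2m_carrier])
  also have "dsum H2m (NFo r s) = dsum (dsum H2m (1\<^sub>m 1)) (dsum (dpow H2m r) (0\<^sub>m s s))"
    unfolding NFo_def by (rule dsum_assoc[symmetric, of _ 2 _ 1 _ "2*r+s"]) auto
  finally have 1: "congruent (dsum H2m X) (dsum (dsum H2m (1\<^sub>m 1)) (dsum (dpow H2m r) (0\<^sub>m s s)))" .
  have 2: "congruent (dsum (dsum H2m (1\<^sub>m 1)) (dsum (dpow H2m r) (0\<^sub>m s s))) (dsum (dsum (1\<^sub>m 1) H2m) (dsum (dpow H2m r) (0\<^sub>m s s)))"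
    by (rule congruent_dsum[OF congruent_comm congruent_refl[of _ "2*r+s"]]) auto
  have 3: "dsum (dsum (1\<^sub>m 1) H2m) (dsum (dpow H2m r) (0\<^sub>m s s)) = NFo (Suc r) s"
    unfolding NFo_def by (simp add: dsum_assoc[of _ 1 _ 2 _ "2*r+s"] dsum_assoc[of _ 2 _ "2*r" _ s, symmetric])
  show ?thesis using congruent_trans[OF 1 2] 3 by simp
qed

lemma step_0o:
  assumes "congruent X (NFo r s)"
  shows "congruent (dsum (0\<^sub>m 1 1) X) (NFo r (Suc s))"
proof -
  let ?Y = "dsum (dpow H2m r) (0\<^sub>m s s)"
  have Y: "?Y \<in> carrier_mat (2*r+s) (2*r+s)" by auto
  have "congruent (dsum (0\<^sub>m 1 1) X) (dsum (0\<^sub>m 1 1) (NFo r s))"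
    by (rule congruent_dsum_left[OF assms zero_carrier_mat])
  also have "dsum (0\<^sub>m 1 1) (NFo r s) = dsum (dsum (0\<^sub>m 1 1) (1\<^sub>m 1)) ?Y"
    unfolding NFo_def by (rule dsum_assoc[symmetric, of _ 1 _ 1 _ "2*r+s"]) auto
  finally have 1: "congruent (dsum (0\<^sub>m 1 1) X) (dsum (dsum (0\<^sub>m 1 1) (1\<^sub>m 1)) ?Y)" .
  have 2: "congruent (dsum (dsum (0\<^sub>m 1 1) (1\<^sub>m 1)) ?Y) (dsum (dsum (1\<^sub>m 1) (0\<^sub>m 1 1)) ?Y)"
    by (rule congruent_dsum[OF congruent_comm congruent_refl[OF Y]]) auto
  have 3: "dsum (dsum (1\<^sub>m 1) (0\<^sub>m 1 1)) ?Y = dsum (1\<^sub>m 1) (dsum (0\<^sub>m 1 1) ?Y)"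
    by (rule dsum_assoc[OF _ _ Y]) auto
  have 4: "congruent (dsum (0\<^sub>m 1 1) ?Y) (dsum ?Y (0\<^sub>m 1 1))"
    by (rule congruent_comm[OF _ Y]) auto
  have 5: "dsum ?Y (0\<^sub>m 1 1) = dsum (dpow H2m r) (0\<^sub>m (Suc s) (Suc s))"
    using dsum_assoc[of "dpow H2m r" "2*r" "0\<^sub>m s s" s "0\<^sub>m 1 1" 1] dsum_zero[of s 1] by simp
  have 6: "congruent (dsum (1\<^sub>m 1) (dsum (0\<^sub>m 1 1) ?Y)) (NFo r (Suc s))"
    unfolding NFo_def using congruent_dsum_left[OF 4, of "1\<^sub>m 1" 1] 5 by simp
  show ?thesis using congruent_trans[OF congruent_trans[OF 1 2]] 3 6 by simp
qed

definition P1 :: "real \<Rightarrow> real mat" where "P1 c = mat 1 1 (\<lambda>_. 1 / c)"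

lemma base1:
  assumes c: "c \<noteq> 0"
  shows "congruent (Mc c [1]) (NFo 0 0)"
proof -
  have inv: "invertible_mat (P1 c)"
    by (rule invertible_intro[of _ 1 "mat 1 1 (\<lambda>_. c)"]) (use c in \<open>auto simp: P1_def scalar_prod_def intro!: eq_matI\<close>)
  have "P1 c * Mc c [1] * transpose_mat (P1 c) = NFo 0 0"
    unfolding NFo_def using c
    by (auto simp: P1_def Mc_def scalar_prod_def dsum_empty_right vc_def intro!: eq_matI)
  then show ?thesis using inv Mc_carrier[of c "[1]"] by (intro congruentI[of _ 1 "P1 c"]) (auto simp: P1_def)
qed

definition P2 :: "real \<Rightarrow> real mat" where "P2 c = mat_of_rows_list 2 [[-c, c],[0, 1/c]]"
definition P2i :: "real \<Rightarrow> real mat" where "P2i c = mat_of_rows_list 2 [[-1/c, c],[0, c]]"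

lemma base2:
  assumes c: "c \<noteq> 0"
  shows "congruent (Mc c [2]) (NFe 0)"
proof -
  have inv: "invertible_mat (P2 c)"
    by (rule invertible_intro[of _ 2 "P2i c"])
      (use c in \<open>auto simp: P2_def P2i_def mat_of_rows_list_def scalar_prod_def upt2 less_2_cases_iff intro!: eq_matI\<close>)
  have "P2 c * Mc c [2] * transpose_mat (P2 c) = NFe 0"
    unfolding NFe_def using c
    by (auto simp: P2_def Gamma2_def mat_of_rows_list_def Mc_def scalar_prod_def upt2 less_2_cases_iff
        dsum_empty_right vc_def less_Suc_eq intro!: eq_matI) (auto simp: field_simps)
  then show ?thesis using inv Mc_carrier[of c "[2]"] by (intro congruentI[of _ 2 "P2 c"]) (auto simp: P2_def mat_of_rows_list_def)
qed



definition goodNF :: "nat list \<Rightarrow> real mat \<Rightarrow> bool" where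
  "goodNF \<alpha> M \<longleftrightarrow> (if \<forall>a\<in>set \<alpha>. even a then congruent M (NFe ((sum_list \<alpha> - 2) div 2))
     else congruent M (NFo ((sum_list \<alpha> - nodd \<alpha>) div 2) (nodd \<alpha> - 1)))"

lemma nodd_Nil[simp]: "nodd [] = 0" unfolding nodd_def by simp
lemma nodd_Cons[simp]: "nodd (k # \<beta>) = (if odd k then Suc (nodd \<beta>) else nodd \<beta>)" unfolding nodd_def by simp

lemma nodd_le: "nodd \<alpha> \<le> sum_list \<alpha>"
proof (induction \<alpha>)
  case (Cons a \<alpha>)
  then show ?case using odd_pos[of a] by auto
qed simp

lemma nodd_pos: "\<not> (\<forall>a\<in>set \<alpha>. even a) \<Longrightarrow> nodd \<alpha> \<ge> 1"
  by (induction \<alpha>) auto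

lemma even_sum_ge2: "\<forall>a\<in>set (\<alpha>::nat list). a > 0 \<Longrightarrow> \<forall>a\<in>set \<alpha>. even a \<Longrightarrow> \<alpha> \<noteq> [] \<Longrightarrow> sum_list \<alpha> \<ge> 2"
proof (cases \<alpha>)
  case (Cons k \<beta>)
  assume "\<forall>a\<in>set \<alpha>. a > 0" "\<forall>a\<in>set \<alpha>. even a"
  then have "k \<ge> 2" using Cons by (auto elim!: evenE)
  then show ?thesis using Cons by simp
qed simp

lemma transfer_H:
  assumes M: "congruent M (dsum H2m M')" and g: "goodNF \<alpha>' M'"
    and s: "sum_list \<alpha> = sum_list \<alpha>' + 2" and ev: "(\<forall>a\<in>set \<alpha>. even a) = (\<forall>a\<in>set \<alpha>'. even a)"
    and no: "nodd \<alpha> = nodd \<alpha>'" and pos: "\<forall>a\<in>set \<alpha>'. a > 0" and ne: "\<alpha>' \<noteq> []"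
  shows "goodNF \<alpha> M"
proof (cases "\<forall>a\<in>set \<alpha>'. even a")
  case True
  then have c: "congruent M' (NFe ((sum_list \<alpha>' - 2) div 2))" using g unfolding goodNF_def by simp
  have "sum_list \<alpha>' \<ge> 2" using even_sum_ge2[OF pos True ne] .
  then have e: "Suc ((sum_list \<alpha>' - 2) div 2) = (sum_list \<alpha> - 2) div 2" using s by simp
  show ?thesis unfolding goodNF_def using True ev congruent_trans[OF M step_He[OF c]] e by simp
next
  case False
  have n\<alpha>: "\<not> (\<forall>a\<in>set \<alpha>. even a)" using False ev by simp
  have c: "congruent M' (NFo ((sum_list \<alpha>' - nodd \<alpha>') div 2) (nodd \<alpha>' - 1))" using g unfolding goodNF_def if_not_P[OF False] .
  have "nodd \<alpha>' \<le> sum_list \<alpha>'" by (rule nodd_le)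
  then have e: "Suc ((sum_list \<alpha>' - nodd \<alpha>') div 2) = (sum_list \<alpha> - nodd \<alpha>) div 2" using s no by simp
  show ?thesis unfolding goodNF_def if_not_P[OF n\<alpha>] using congruent_trans[OF M step_Ho[OF c]] e no by simp
qed

lemma transfer_0:
  assumes M: "congruent M (dsum (0\<^sub>m 1 1) M')" and g: "goodNF \<alpha>' M'"
    and s: "sum_list \<alpha> = sum_list \<alpha>' + 1" and ev: "\<not> (\<forall>a\<in>set \<alpha>. even a)" "\<not> (\<forall>a\<in>set \<alpha>'. even a)"
    and no: "nodd \<alpha> = Suc (nodd \<alpha>')"
  shows "goodNF \<alpha> M"
proof -
  have c: "congruent M' (NFo ((sum_list \<alpha>' - nodd \<alpha>') div 2) (nodd \<alpha>' - 1))" using g unfolding goodNF_def if_not_P[OF ev(2)] .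
  have "nodd \<alpha>' \<ge> 1" using nodd_pos[OF ev(2)] .
  then have e: "Suc (nodd \<alpha>' - 1) = nodd \<alpha> - 1" "(sum_list \<alpha>' - nodd \<alpha>') div 2 = (sum_list \<alpha> - nodd \<alpha>) div 2"
    using s no by auto
  show ?thesis unfolding goodNF_def if_not_P[OF ev(1)] using congruent_trans[OF M step_0o[OF c]] e by simp
qed

lemma Mc_NF:
  assumes "\<forall>a\<in>set \<alpha>. a > 0" "\<alpha> \<noteq> []" "c \<noteq> 0"
  shows "goodNF \<alpha> (Mc c \<alpha>)"
  using assms
proof (induction "sum_list \<alpha>" arbitrary: \<alpha> rule: less_induct)
  case less
  then obtain k \<beta> where \<alpha>: "\<alpha> = k # \<beta>" by (cases \<alpha>) auto
  have kpos: "k > 0" using less.prems \<alpha> by auto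
  show ?case
  proof (cases "k \<ge> 3")
    case True
    let ?\<alpha>' = "(k - 2) # \<beta>"
    have g: "goodNF ?\<alpha>' (Mc c ?\<alpha>')"
      using less.hyps[of ?\<alpha>'] less.prems True \<alpha> by auto
    show ?thesis unfolding \<alpha>
      by (rule transfer_H[OF red_a[OF True] g]) (use True less.prems \<alpha> in auto)
  next
    case False
    then have k12: "k = 1 \<or> k = 2" using kpos by auto
    show ?thesis
    proof (cases \<beta>)
      case Nil
      then show ?thesis using k12 \<alpha> base1[OF less.prems(3)] base2[OF less.prems(3)]
        unfolding goodNF_def by auto
    next
      case (Cons b \<gamma>)
      have bpos: "b > 0" using less.prems \<alpha> Cons by auto
      show ?thesis
      proof (cases "b \<ge> 3")
        case True
        let ?\<alpha>' = "(b - 2) # k # \<gamma>"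
        have g: "goodNF ?\<alpha>' (Mc c ?\<alpha>')"
          using less.hyps[of ?\<alpha>'] less.prems True \<alpha> Cons by auto
        have M: "congruent (Mc c (k # b # \<gamma>)) (dsum H2m (Mc c ?\<alpha>'))"
          by (rule congruent_trans[OF red_swap red_a[OF True]])
        show ?thesis unfolding \<alpha> Cons
          by (rule transfer_H[OF M g]) (use True less.prems \<alpha> Cons in auto)
      next
        case False
        then have b12: "b = 1 \<or> b = 2" using bpos by auto
        then consider "k = 1" "b = 1" | "k = 2" "b = 1" | "k = 1" "b = 2" | "k = 2" "b = 2"
          using k12 by blast
        then show ?thesis
        proof cases
          case 1
          have g: "goodNF (1 # \<gamma>) (Mc c (1 # \<gamma>))"
            using less.hyps[of "1 # \<gamma>"] less.prems \<alpha> Cons 1 by auto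
          show ?thesis unfolding \<alpha> Cons 1
            by (rule transfer_0[OF red_c g]) auto
        next
          case 2
          have g: "goodNF (1 # \<gamma>) (Mc c (1 # \<gamma>))"
            using less.hyps[of "1 # \<gamma>"] less.prems \<alpha> Cons 2 by auto
          show ?thesis unfolding \<alpha> Cons 2
            by (rule transfer_H[OF red_d g]) (use less.prems \<alpha> Cons in auto)
        next
          case 3
          have g: "goodNF (1 # \<gamma>) (Mc c (1 # \<gamma>))"
            using less.hyps[of "1 # \<gamma>"] less.prems \<alpha> Cons 3 by auto
          have M: "congruent (Mc c (1 # 2 # \<gamma>)) (dsum H2m (Mc c (1 # \<gamma>)))"
            by (rule congruent_trans[OF red_swap red_d])
          show ?thesis unfolding \<alpha> Cons 3
            by (rule transfer_H[OF M g]) (use less.prems \<alpha> Cons in auto)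
        next
          case 4
          have g: "goodNF (2 # \<gamma>) (Mc c (2 # \<gamma>))"
            using less.hyps[of "2 # \<gamma>"] less.prems \<alpha> Cons 4 by auto
          show ?thesis unfolding \<alpha> Cons 4
            by (rule transfer_H[OF red_e g]) (use less.prems \<alpha> Cons in auto)
        qed
      qed
    qed
  qed
qed



fun blk :: "nat list \<Rightarrow> nat \<Rightarrow> nat" where
  "blk [] a = 0"
| "blk (k # \<beta>) a = (if a < k then 0 else Suc (blk \<beta> (a - k)))"

lemma blk_lt: "a < sum_list \<alpha> \<Longrightarrow> blk \<alpha> a < length \<alpha>"
  by (induction \<alpha> arbitrary: a) auto

lemma Kmat_index:
  "a < sum_list \<alpha> \<Longrightarrow> b < sum_list \<alpha> \<Longrightarrow>
   Kmat \<alpha> $$ (a,b) = (if blk \<alpha> a = blk \<alpha> b then (if a < b then 1 else if b < a then -1 else 0) else 0)"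
proof (induction \<alpha> arbitrary: a b)
  case (Cons k \<beta>)
  show ?case using Cons.prems Cons.IH[of "a - k" "b - k"]
    by (auto simp: dsum_index[of _ k _ "sum_list \<beta>"])
qed simp

lemma blk_take:
  assumes "j < length \<alpha>" "a < sum_list \<alpha>"
  shows "(sum_list (take j \<alpha>) \<le> a \<and> a < sum_list (take j \<alpha>) + \<alpha> ! j) \<longleftrightarrow> blk \<alpha> a = j"
  using assms
proof (induction \<alpha> arbitrary: a j)
  case (Cons k \<beta>)
  show ?case
  proof (cases j)
    case 0
    then show ?thesis by auto
  next
    case (Suc j')
    show ?thesis
    proof (cases "a < k")
      case True
      then show ?thesis using Suc by auto
    next
      case False
      then have "a - k < sum_list \<beta>" using Cons.prems by auto
      then show ?thesis using Cons.IH[of j' "a - k"] Suc False Cons.prems by (auto; linarith)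
    qed
  qed
qed simp

definition bx :: "nat list \<Rightarrow> nat \<Rightarrow> nat \<Rightarrow> real" where
  "bx \<alpha> j a = (if blk \<alpha> a = j then 1 else 0)"

definition sval :: "nat \<Rightarrow> nat \<Rightarrow> real" where
  "sval a b = (if a < b then 1 else if a = b then 1/2 else 0)"

lemma F1: "a < sum_list \<alpha> \<Longrightarrow> (\<Sum>j<length \<alpha>. bx \<alpha> j a) = 1"
  using blk_lt[of a \<alpha>] unfolding bx_def by (simp add: sum.delta' eq_commute[of "blk _ _"])

lemma F2: "a < sum_list \<alpha> \<Longrightarrow> (\<Sum>j<length \<alpha>. bx \<alpha> j a * bx \<alpha> j b) = (if blk \<alpha> a = blk \<alpha> b then 1 else 0)"
proof -
  assume a: "a < sum_list \<alpha>"
  have "(\<Sum>j<length \<alpha>. bx \<alpha> j a * bx \<alpha> j b) = (\<Sum>j<length \<alpha>. if j = blk \<alpha> a then bx \<alpha> j b else 0)"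
    by (rule sum.cong) (auto simp: bx_def)
  also have "\<dots> = bx \<alpha> (blk \<alpha> a) b" using blk_lt[OF a] by (simp add: sum.delta')
  finally show ?thesis by (auto simp: bx_def)
qed

lemma F3: "a < sum_list \<alpha> \<Longrightarrow> (\<Sum>j<length \<alpha>. bx \<alpha> j a * bx \<alpha> j b * sval a b) = (if blk \<alpha> a = blk \<alpha> b then sval a b else 0)"
  using F2[of a \<alpha> b] by (simp add: sum_distrib_right[symmetric])

section \<open>Group computations\<close>

lemma tmult_simp:
  assumes "w \<in> carrier_vec m" "u \<in> carrier_vec m" "A \<in> carrier_mat m m" "B \<in> carrier_mat m m"
  shows "tmult m (a, w, A) (b, u, B) = (a * b, a \<cdot>\<^sub>v u + b \<cdot>\<^sub>v w, a \<cdot>\<^sub>m B + b \<cdot>\<^sub>m A + outer m w u)"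
  unfolding tmult_def by simp

lemma tmult_one:
  assumes "w \<in> carrier_vec m" "u \<in> carrier_vec m" "A \<in> carrier_mat m m" "B \<in> carrier_mat m m"
  shows "tmult m (1, w, A) (1, u, B) = (1, w + u, A + B + outer m w u)"
  unfolding tmult_def using assms by (auto simp: comm_add_vec comm_add_mat)

lemma texp_simp:
  assumes "v \<in> carrier_vec m" "B \<in> carrier_mat m m"
  shows "texp m (0, v, B) = (1, v, B + (1/2) \<cdot>\<^sub>m outer m v v)"
  unfolding texp_def tmult_def tadd_def tone_def using assms
  by (auto intro!: eq_vecI eq_matI)

lemma tgroup_iff:
  "g \<in> tgroup m \<longleftrightarrow> (\<exists>w A. g = (1, w, A) \<and> w \<in> carrier_vec m \<and> A \<in> carrier_mat m m \<and> A + transpose_mat A = outer m w w)"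
proof
  assume "g \<in> tgroup m"
  then obtain v B where g: "g = texp m (0, v, B)" and v: "v \<in> carrier_vec m" and B: "B \<in> carrier_mat m m"
    and Bt: "transpose_mat B = - B"
    unfolding tgroup_def tlie_def by auto
  have "B + (1/2) \<cdot>\<^sub>m outer m v v + transpose_mat (B + (1/2) \<cdot>\<^sub>m outer m v v) = outer m v v"
  proof (rule eq_matI)
    fix i j assume ij: "i < dim_row (outer m v v)" "j < dim_col (outer m v v)"
    have "transpose_mat B $$ (j, i) = (- B) $$ (j,i)" using Bt by simp
    then have "B $$ (i,j) = - B $$ (j,i)" using ij B by auto
    then show "(B + (1/2) \<cdot>\<^sub>m outer m v v + transpose_mat (B + (1/2) \<cdot>\<^sub>m outer m v v)) $$ (i,j) = outer m v v $$ (i,j)"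
      using ij B by auto
  qed (use B in auto)
  then show "\<exists>w A. g = (1, w, A) \<and> w \<in> carrier_vec m \<and> A \<in> carrier_mat m m \<and> A + transpose_mat A = outer m w w"
    using g v B by (auto simp: texp_simp)
next
  assume "\<exists>w A. g = (1, w, A) \<and> w \<in> carrier_vec m \<and> A \<in> carrier_mat m m \<and> A + transpose_mat A = outer m w w"
  then obtain w A where g: "g = (1, w, A)" and w: "w \<in> carrier_vec m" and A: "A \<in> carrier_mat m m"
    and sym: "A + transpose_mat A = outer m w w" by auto
  let ?B = "A - (1/2) \<cdot>\<^sub>m outer m w w"
  have e: "\<And>i j. i < m \<Longrightarrow> j < m \<Longrightarrow> A $$ (i,j) + A $$ (j,i) = w $ i * w $ j"
  proof -
    fix i j assume "i < m" "j < m"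
    then have "(A + transpose_mat A) $$ (i,j) = outer m w w $$ (i,j)" using sym by simp
    then show "A $$ (i,j) + A $$ (j,i) = w $ i * w $ j" using \<open>i < m\<close> \<open>j < m\<close> A by simp
  qed
  have Bt: "transpose_mat ?B = - ?B"
  proof (rule eq_matI)
    fix i j assume ij: "i < dim_row (- ?B)" "j < dim_col (- ?B)"
    then have "i < m" "j < m" using A by auto
    then show "transpose_mat ?B $$ (i,j) = (- ?B) $$ (i,j)"
      using A e[of i j] by (auto simp: mult.commute)
  qed (use A in auto)
  have "g = texp m (0, w, ?B)"
    unfolding g using w A by (subst texp_simp) (auto intro!: eq_matI)
  moreover have "(0, w, ?B) \<in> tlie m" unfolding tlie_def using w A Bt by auto
  ultimately show "g \<in> tgroup m" unfolding tgroup_def by auto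
qed



lemma tinv_simp:
  assumes w: "w \<in> carrier_vec m" and A: "A \<in> carrier_mat m m" and sym: "A + transpose_mat A = outer m w w"
  shows "tinv m (1, w, A) = (1, - w, - A + outer m w w)"
  unfolding tinv_def
proof (rule the_equality)
  have e: "\<And>i j. i < m \<Longrightarrow> j < m \<Longrightarrow> A $$ (i,j) + A $$ (j,i) = w $ i * w $ j"
  proof -
    fix i j assume "i < m" "j < m"
    then have "(A + transpose_mat A) $$ (i,j) = outer m w w $$ (i,j)" using sym by simp
    then show "A $$ (i,j) + A $$ (j,i) = w $ i * w $ j" using \<open>i < m\<close> \<open>j < m\<close> A by simp
  qed
  have s2: "(- A + outer m w w) + transpose_mat (- A + outer m w w) = outer m (- w) (- w)"
  proof (rule eq_matI)
    fix i j assume ij: "i < dim_row (outer m (- w) (- w))" "j < dim_col (outer m (- w) (- w))"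
    then have "i < m" "j < m" by auto
    then show "((- A + outer m w w) + transpose_mat (- A + outer m w w)) $$ (i,j) = outer m (- w) (- w) $$ (i,j)"
      using A w e[of i j] by (auto simp: mult.commute)
  qed (use A in auto)
  show "(1, - w, - A + outer m w w) \<in> tgroup m \<and> tmult m (1, w, A) (1, - w, - A + outer m w w) = tone m"
    unfolding tgroup_iff using w A s2
    by (auto simp: tmult_one tone_def intro!: eq_vecI eq_matI)
next
  fix y assume y: "y \<in> tgroup m \<and> tmult m (1, w, A) y = tone m"
  then obtain u B where yy: "y = (1, u, B)" and u: "u \<in> carrier_vec m" and B: "B \<in> carrier_mat m m"
    unfolding tgroup_iff by auto
  have "(1, w + u, A + B + outer m w u) = (1, 0\<^sub>v m, 0\<^sub>m m m)"
    using y unfolding yy tone_def using tmult_one[OF w u A B] by simp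
  then have 1: "w + u = 0\<^sub>v m" and 2: "A + B + outer m w u = 0\<^sub>m m m" by auto
  have uu: "u = - w"
  proof (rule eq_vecI)
    fix i assume "i < dim_vec (- w)"
    then have i: "i < m" using w by auto
    have "(w + u) $ i = 0" using 1 i by simp
    then show "u $ i = (- w) $ i" using i u w by simp
  qed (use u w in auto)
  have BB: "B = - A + outer m w w"
  proof (rule eq_matI)
    fix i j assume ij: "i < dim_row (- A + outer m w w)" "j < dim_col (- A + outer m w w)"
    then have i: "i < m" and j: "j < m" using A by auto
    have "(A + B + outer m w u) $$ (i,j) = 0" using 2 i j by simp
    then show "B $$ (i,j) = (- A + outer m w w) $$ (i,j)" using i j A B u w uu by simp
  qed (use A B in auto)
  show "y = (1, - w, - A + outer m w w)" using yy uu BB by simp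
qed

lemma tlog_simp:
  assumes u: "u \<in> carrier_vec m" and C: "C \<in> carrier_mat m m"
  shows "tlog m (1, u, C) = (0, u, mat m m (\<lambda>(i,j). C $$ (i,j) - u $ i * u $ j / 2))"
  unfolding tlog_def tone_def tadd_def tmult_def Let_def using u C
  by (auto intro!: eq_vecI eq_matI)

lemma tsum_simp:
  assumes "\<forall>t\<in>set ts. fst (snd t) \<in> carrier_vec m \<and> snd (snd t) \<in> carrier_mat m m"
  shows "tsum m ts = (sum_list (map fst ts), vec m (\<lambda>a. sum_list (map (\<lambda>t. fst (snd t) $ a) ts)),
     mat m m (\<lambda>ab. sum_list (map (\<lambda>t. snd (snd t) $$ ab) ts)))"
  using assms
proof (induction ts)
  case Nil
  then show ?case unfolding tsum_def tzero_def by (auto intro!: eq_vecI eq_matI)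
next
  case (Cons t ts)
  obtain a v A where t: "t = (a, v, A)" by (cases t) auto
  have v: "v \<in> carrier_vec m" and A: "A \<in> carrier_mat m m" using Cons.prems t by auto
  have "tsum m (t # ts) = tadd t (tsum m ts)" unfolding tsum_def by simp
  also have "\<dots> = tadd (a, v, A) (sum_list (map fst ts), vec m (\<lambda>a. sum_list (map (\<lambda>t. fst (snd t) $ a) ts)),
     mat m m (\<lambda>ab. sum_list (map (\<lambda>t. snd (snd t) $$ ab) ts)))"
    using Cons t by simp
  finally show ?case unfolding tadd_def t using v A by (auto intro!: eq_vecI eq_matI)
qed



definition Vj :: "nat list \<Rightarrow> nat \<Rightarrow> real vec" where
  "Vj \<alpha> j = vec (sum_list \<alpha>) (\<lambda>a. bx \<alpha> j a)"
definition Sj :: "nat list \<Rightarrow> nat \<Rightarrow> real mat" where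
  "Sj \<alpha> j = mat (sum_list \<alpha>) (sum_list \<alpha>) (\<lambda>(a,b). bx \<alpha> j a * bx \<alpha> j b * sval a b)"

lemma box_Pair_iff: "(x, y) \<in> box (a, c) (b, d) \<longleftrightarrow> x \<in> box a b \<and> y \<in> box c d"
  by (force simp: mem_box Basis_prod_def)

lemma box_rect_integral:
  fixes p1 q1 p2 q2 :: real
  assumes "p1 < q1" "p2 < q2"
  shows "((\<lambda>x. k) has_integral (k * (q1 - p1) * (q2 - p2))) (box (p1, p2) (q1, q2))"
proof -
  have "((\<lambda>x. k) has_integral (measure lborel (cbox (p1, p2) (q1, q2)) *\<^sub>R k)) (cbox (p1, p2) (q1, q2))"
    by (rule has_integral_const)
  moreover have "measure lborel (cbox (p1, p2) (q1, q2)) = (q1 - p1) * (q2 - p2)"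
    using assms by (simp add: content_Pair content_real)
  ultimately show ?thesis using has_integral_open_interval[of "\<lambda>x. k" _ "(p1,p2)" "(q1,q2)"] by (simp add: mult_ac)
qed

definition Tri :: "(real \<times> real) set" where "Tri = {(s, t). 0 < s \<and> s < t \<and> t < 1}"

lemma I1:
  fixes p1 q1 p2 q2 c1 c2 :: real
  assumes "0 \<le> p1" "p1 < q1" "q1 \<le> p2" "p2 < q2" "q2 \<le> 1"
  shows "((\<lambda>(s,t). (if p1 < s \<and> s < q1 then c1 else 0) * (if p2 < t \<and> t < q2 then c2 else 0)) has_integral
     (c1 * c2 * (q1 - p1) * (q2 - p2))) Tri"
proof -
  have "((\<lambda>x. c1 * c2) has_integral (c1 * c2 * (q1 - p1) * (q2 - p2))) (box (p1, p2) (q1, q2))"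
    using assms by (intro box_rect_integral) auto
  then have "((\<lambda>x. if x \<in> box (p1, p2) (q1, q2) then c1 * c2 else 0) has_integral (c1 * c2 * (q1 - p1) * (q2 - p2))) UNIV"
    by (subst has_integral_restrict_UNIV)
  moreover have "(\<lambda>x. if x \<in> Tri then (\<lambda>(s,t). (if p1 < s \<and> s < q1 then c1 else 0) * (if p2 < t \<and> t < q2 then c2 else 0)) x else 0)
     = (\<lambda>x. if x \<in> box (p1, p2) (q1, q2) then c1 * c2 else 0)"
    using assms by (auto simp: Tri_def box_Pair_iff fun_eq_iff)
  ultimately show ?thesis by (subst has_integral_restrict_UNIV[symmetric]) simp
qed

lemma I2:
  fixes p1 q1 p2 q2 c1 c2 :: real
  assumes "q2 \<le> p1"
  shows "((\<lambda>(s,t). (if p1 < s \<and> s < q1 then c1 else 0) * (if p2 < t \<and> t < q2 then c2 else 0)) has_integral 0) Tri"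
proof -
  have "(\<lambda>x. if x \<in> Tri then (\<lambda>(s,t). (if p1 < s \<and> s < q1 then c1 else 0) * (if p2 < t \<and> t < q2 then c2 else 0)) x else 0)
     = (\<lambda>x. 0)"
    using assms by (auto simp: Tri_def fun_eq_iff)
  then show ?thesis by (subst has_integral_restrict_UNIV[symmetric]) simp
qed

lemma negl_line1: "negligible {x :: real \<times> real. fst x = c}"
proof -
  have "{x :: real \<times> real. fst x = c} = {x. (1, 0) \<bullet> x = c}" by auto
  then show ?thesis using negligible_hyperplane[of "(1::real, 0::real)" c] by (simp add: zero_prod_def)
qed

lemma negl_line2: "negligible {x :: real \<times> real. snd x = c}"
proof -
  have "{x :: real \<times> real. snd x = c} = {x. (0, 1) \<bullet> x = c}" by auto
  then show ?thesis using negligible_hyperplane[of "(0::real, 1::real)" c] by (simp add: zero_prod_def)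
qed

lemma negl_diag: "negligible {x :: real \<times> real. fst x = snd x}"
proof -
  have "{x :: real \<times> real. fst x = snd x} = {x. (1, -1) \<bullet> x = 0}" by auto
  then show ?thesis using negligible_hyperplane[of "(1::real, -1::real)" 0] by (simp add: zero_prod_def)
qed

lemma swap_cbox: "prod.swap ` cbox u v = cbox (prod.swap u) (prod.swap v)"
  by (cases u; cases v) simp

lemma swap_content: "measure lborel (prod.swap ` cbox u v) = measure lborel (cbox (u :: real \<times> real) v)"
  by (cases u; cases v) (simp add: content_Pair)

lemma tri_measure:
  fixes p q :: real
  assumes pq: "p < q"
  shows "((\<lambda>x. 1) has_integral ((q - p)^2 / 2)) {(s, t). p < s \<and> s < t \<and> t < q}"
proof -
  let ?U = "{(s, t). p < s \<and> s < t \<and> t < q} :: (real \<times> real) set"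
  let ?L = "{(s, t). p < t \<and> t < s \<and> s < q} :: (real \<times> real) set"
  let ?C = "cbox (p, p) (q, q)"
  have "open ?U"
  proof -
    have "?U = {x. p < fst x} \<inter> {x. fst x < snd x} \<inter> {x. snd x < q}" by auto
    moreover have "open {x :: real \<times> real. p < fst x}" by (intro open_Collect_less continuous_intros)
    moreover have "open {x :: real \<times> real. fst x < snd x}" by (intro open_Collect_less continuous_intros)
    moreover have "open {x :: real \<times> real. snd x < q}" by (intro open_Collect_less continuous_intros)
    ultimately show ?thesis by auto
  qed
  moreover have "bounded ?U"
  proof -
    have "?U \<subseteq> ?C" by auto
    then show ?thesis using bounded_cbox bounded_subset by blast
  qed
  ultimately have "?U \<in> lmeasurable" by (rule lmeasurable_open[rotated])
  then have iU: "(indicat_real ?U has_integral measure lebesgue ?U) UNIV"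
    using lmeasurable_iff_indicator_has_integral by blast
  let ?mU = "measure lebesgue ?U"
  have UC: "?U \<subseteq> ?C" by auto
  have iUC: "(indicat_real ?U has_integral ?mU) ?C"
  proof -
    have "(\<lambda>x. if x \<in> ?C then indicat_real ?U x else 0) = indicat_real ?U"
      using UC by (auto simp: fun_eq_iff indicator_def)
    then show ?thesis using iU by (subst has_integral_restrict_UNIV[symmetric]) simp
  qed
  have iLC: "(indicat_real ?L has_integral ?mU) ?C"
  proof -
    have "((\<lambda>x. indicat_real ?U (prod.swap x)) has_integral (1 / 1) *\<^sub>R ?mU) (prod.swap ` ?C)"
      apply (rule has_integral_twiddle[of 1 prod.swap prod.swap, OF _ _ _ _ _ _ _ iUC])
      subgoal by simp
      subgoal by simp
      subgoal by simp
      subgoal using isCont_swap by blast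
      subgoal by (metis swap_cbox)
      subgoal by (metis swap_cbox)
      subgoal using swap_content by simp
      done
    moreover have "(\<lambda>x. indicat_real ?U (prod.swap x)) = indicat_real ?L"
      by (auto simp: fun_eq_iff indicator_def)
    ultimately show ?thesis by simp
  qed
  have sum: "((\<lambda>x. indicat_real ?U x + indicat_real ?L x) has_integral (?mU + ?mU)) ?C"
    by (rule has_integral_add[OF iUC iLC])
  let ?N = "{x :: real \<times> real. fst x = p} \<union> {x. fst x = q} \<union> {x. snd x = p} \<union> {x. snd x = q} \<union> {x. fst x = snd x}"
  have negN: "negligible ?N" using negl_line1 negl_line2 negl_diag by auto
  have "((\<lambda>x. 1) has_integral (?mU + ?mU)) ?C"
    by (rule has_integral_spike[OF negN _ sum]) (auto simp: indicator_def)
  moreover have "((\<lambda>x. 1) has_integral (q - p)^2) ?C"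
    using has_integral_const[of "1::real" "(p, p)" "(q, q)"] pq by (simp add: content_Pair content_real power2_eq_square)
  ultimately have "?mU + ?mU = (q - p)^2" using has_integral_unique by blast
  then have mU: "?mU = (q - p)^2 / 2" by simp
  have "((\<lambda>x. 1) has_integral ?mU) ?U"
  proof -
    have "(\<lambda>x. if x \<in> ?U then 1 else 0) = indicat_real ?U" by (auto simp: fun_eq_iff indicator_def)
    then show ?thesis using iU by (subst has_integral_restrict_UNIV[symmetric]) simp
  qed
  then show ?thesis using mU by simp
qed

lemma I3:
  fixes p q c :: real
  assumes "0 \<le> p" "p < q" "q \<le> 1"
  shows "((\<lambda>(s,t). (if p < s \<and> s < q then c else 0) * (if p < t \<and> t < q then c else 0)) has_integral
     (c * c * (q - p)^2 / 2)) Tri"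
proof -
  have "((\<lambda>x. c * c) has_integral (c * c) * ((q - p)^2 / 2)) {(s, t). p < s \<and> s < t \<and> t < q}"
    using has_integral_mult_right[OF tri_measure[OF assms(2)], of "c * c"] by simp
  then have "((\<lambda>x. if x \<in> {(s, t). p < s \<and> s < t \<and> t < q} then c * c else 0) has_integral (c * c) * ((q - p)^2 / 2)) UNIV"
    by (subst has_integral_restrict_UNIV)
  moreover have "(\<lambda>x. if x \<in> Tri then (\<lambda>(s,t). (if p < s \<and> s < q then c else 0) * (if p < t \<and> t < q then c else 0)) x else 0)
     = (\<lambda>x. if x \<in> {(s, t). p < s \<and> s < t \<and> t < q} then c * c else 0)"
    using assms by (auto simp: Tri_def fun_eq_iff)
  ultimately show ?thesis by (subst has_integral_restrict_UNIV[symmetric]) simp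
qed



definition Dv :: "nat \<Rightarrow> nat \<Rightarrow> (nat \<Rightarrow> real) \<Rightarrow> nat \<Rightarrow> real \<Rightarrow> real" where
  "Dv a b tt c s = (if a \<le> c \<and> c < b then
     (if tt (c - a) < s \<and> s < tt (Suc (c - a)) then 1 / (tt (Suc (c - a)) - tt (c - a)) else 0) else 0)"

definition pathP :: "nat \<Rightarrow> nat \<Rightarrow> (nat \<Rightarrow> real) \<Rightarrow> real set \<Rightarrow> path \<Rightarrow> bool" where
  "pathP a b tt F X \<longleftrightarrow> tt 0 = 0 \<and> tt (b - a) = 1 \<and> (\<forall>l < b - a. tt l < tt (Suc l)) \<and> finite F \<and>
     (\<forall>s\<in>{0<..<1} - F. \<forall>c. ((\<lambda>r. X r c) has_real_derivative Dv a b tt c s) (at s)) \<and>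
     (\<forall>c. X 0 c = 0) \<and> (\<forall>c. X 1 c = (if a \<le> c \<and> c < b then 1 else 0))"

lemma mono_tt:
  assumes "\<forall>l < n. tt l < tt (Suc l)" "i \<le> j" "j \<le> n"
  shows "tt i \<le> (tt j :: real)"
  using assms(2,3)
proof (induction j)
  case 0 then show ?case by simp
next
  case (Suc j)
  show ?case
  proof (cases "i = Suc j")
    case False
    then have "tt i \<le> tt j" using Suc by auto
    also have "\<dots> < tt (Suc j)" using assms(1) Suc.prems by auto
    finally show ?thesis by simp
  qed simp
qed

lemma path_base: "pathP a (Suc a) real {} (axis a)"
proof -
  have "((\<lambda>r. axis a r c) has_real_derivative Dv a (Suc a) real c s) (at s)" if s: "s \<in> {0<..<1}" for s c
  proof (cases "c = a")
    case True
    then have "(\<lambda>r. axis a r c) = (\<lambda>r. r)" by (auto simp: axis_def)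
    moreover have "Dv a (Suc a) real c s = 1" using True s by (simp add: Dv_def)
    ultimately show ?thesis by (auto intro!: derivative_eq_intros)
  next
    case False
    then have "(\<lambda>r. axis a r c) = (\<lambda>r. 0)" by (auto simp: axis_def)
    moreover have "Dv a (Suc a) real c s = 0" using False by (simp add: Dv_def)
    ultimately show ?thesis by (auto intro!: derivative_eq_intros)
  qed
  then show ?thesis unfolding pathP_def by (auto simp: axis_def)
qed

lemma path_step:
  assumes P: "pathP (Suc a) b tt' F' Y" and ab: "Suc a < b"
  shows "pathP a b (\<lambda>l. if l = 0 then 0 else (1 + tt' (l - 1)) / 2) (insert (1/2) ((\<lambda>x. (1 + x) / 2) ` F')) (pcat (axis a) Y)"
proof -
  let ?tt = "\<lambda>l. if l = 0 then 0 else (1 + tt' (l - 1)) / 2"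
  let ?F = "insert (1/2) ((\<lambda>x. (1 + x) / 2) ` F')"
  have t0: "tt' 0 = 0" and t1: "tt' (b - Suc a) = 1" and tm: "\<forall>l < b - Suc a. tt' l < tt' (Suc l)" and fF: "finite F'"
    and dY: "\<forall>s\<in>{0<..<1} - F'. \<forall>c. ((\<lambda>r. Y r c) has_real_derivative Dv (Suc a) b tt' c s) (at s)"
    and Y0: "\<forall>c. Y 0 c = 0" and Y1: "\<forall>c. Y 1 c = (if Suc a \<le> c \<and> c < b then 1 else 0)"
    using P unfolding pathP_def by auto
  have tnn: "tt' l \<ge> 0" if "l \<le> b - Suc a" for l using mono_tt[OF tm, of 0 l] that t0 by auto
  have tle: "tt' l \<le> 1" if "l \<le> b - Suc a" for l using mono_tt[OF tm, of l "b - Suc a"] that t1 by auto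
  have deriv: "((\<lambda>r. pcat (axis a) Y r c) has_real_derivative Dv a b ?tt c s) (at s)"
    if s: "s \<in> {0<..<1} - ?F" for s c
  proof (cases "s < 1/2")
    case True
    have e: "\<And>r. r \<in> {..<1/2} \<Longrightarrow> (if c = a then 2 * r else 0) = pcat (axis a) Y r c"
      by (auto simp: pcat_def axis_def)
    have "((\<lambda>r. if c = a then 2 * r else 0) has_real_derivative (if c = a then 2 else 0)) (at s)"
      by (cases "c = a") (auto intro!: derivative_eq_intros)
    then have d1: "((\<lambda>r. pcat (axis a) Y r c) has_real_derivative (if c = a then 2 else 0)) (at s)"
      by (rule has_field_derivative_transform_within_open[where S="{..<1/2}"]) (use True e in auto)
    have "Dv a b ?tt c s = (if c = a then 2 else 0)"
    proof (cases "c = a")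
      case True
      then show ?thesis using \<open>s < 1/2\<close> s t0 ab by (auto simp: Dv_def)
    next
      case False
      have "\<not> (?tt (c - a) < s)" if "a \<le> c" "c < b"
      proof -
        have ne: "c - a \<noteq> 0" using False that by auto
        have "0 \<le> tt' (c - a - 1)" by (rule tnn) (use that in arith)
        then show ?thesis using ne \<open>s < 1/2\<close> by auto
      qed
      then show ?thesis using False by (auto simp: Dv_def)
    qed
    then show ?thesis using d1 by simp
  next
    case False
    then have s2: "s > 1/2" using s by auto
    have s1: "2 * s - 1 \<in> {0<..<1} - F'"
    proof -
      have "2 * s - 1 \<notin> F'"
      proof
        assume "2 * s - 1 \<in> F'"
        then have "(1 + (2 * s - 1)) / 2 \<in> (\<lambda>x. (1 + x) / 2) ` F'" by blast
        then show False using s by auto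
      qed
      then show ?thesis using s s2 by auto
    qed
    have dy: "((\<lambda>r. Y r c) has_real_derivative Dv (Suc a) b tt' c (2 * s - 1)) (at (2 * s - 1))"
      using dY s1 by blast
    have dg: "((\<lambda>r. 2 * r - 1) has_real_derivative 2) (at s)" by (auto intro!: derivative_eq_intros)
    have dc: "((\<lambda>r. Y (2 * r - 1) c) has_real_derivative (Dv (Suc a) b tt' c (2 * s - 1) * 2)) (at s)"
      using DERIV_chain2[where f="\<lambda>r. Y r c" and g="\<lambda>r. 2 * r - 1", OF dy dg] by simp
    have "((\<lambda>r. axis a 1 c + Y (2 * r - 1) c) has_real_derivative 0 + (Dv (Suc a) b tt' c (2 * s - 1) * 2)) (at s)"
      by (rule DERIV_add[OF DERIV_const dc])
    then have dd: "((\<lambda>r. axis a 1 c + Y (2 * r - 1) c) has_real_derivative (Dv (Suc a) b tt' c (2 * s - 1) * 2)) (at s)"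
      by simp
    have e: "\<And>r. r \<in> {1/2<..} \<Longrightarrow> axis a 1 c + Y (2 * r - 1) c = pcat (axis a) Y r c"
      by (auto simp: pcat_def)
    have d1: "((\<lambda>r. pcat (axis a) Y r c) has_real_derivative (Dv (Suc a) b tt' c (2 * s - 1) * 2)) (at s)"
      by (rule has_field_derivative_transform_within_open[where S="{1/2<..}", OF dd _ _ e]) (use s2 in auto)
    have "Dv a b ?tt c s = Dv (Suc a) b tt' c (2 * s - 1) * 2"
    proof (cases "Suc a \<le> c \<and> c < b")
      case True
      obtain l where l: "c - a = Suc l" "c - Suc a = l" using True by (metis Suc_diff_Suc Suc_le_lessD diff_Suc_Suc)
      have lt: "l < b - Suc a" using True l by auto
      have gap: "tt' (Suc l) - tt' l > 0" using tm lt by auto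
      have "(1 + tt' l) / 2 < s \<and> s < (1 + tt' (Suc l)) / 2 \<longleftrightarrow> tt' l < 2 * s - 1 \<and> 2 * s - 1 < tt' (Suc l)"
        by auto
      then show ?thesis using True l gap by (auto simp: Dv_def field_simps)
    next
      case False
      then show ?thesis using s2 t0 by (auto simp: Dv_def)
    qed
    then show ?thesis using d1 by simp
  qed
  have tt1: "?tt (b - a) = 1"
  proof -
    have "b - a = Suc (b - Suc a)" using ab by auto
    then show ?thesis using t1 by simp
  qed
  have ttm: "\<forall>l < b - a. ?tt l < ?tt (Suc l)"
  proof (intro allI impI)
    fix l assume l: "l < b - a"
    show "?tt l < ?tt (Suc l)"
    proof (cases l)
      case 0
      then show ?thesis using t0 by simp
    next
      case (Suc l')
      then have "l' < b - Suc a" using l by auto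
      then show ?thesis using tm Suc by auto
    qed
  qed
  show ?thesis unfolding pathP_def
    using deriv tt1 ttm fF Y0 Y1 ab by (auto simp: pcat_def axis_def)
qed

lemma pconcat_upt:
  "n \<ge> 1 \<Longrightarrow> pconcat (map axis [a..<a + Suc n]) = pcat (axis a) (pconcat (map axis [Suc a..<a + Suc n]))"
proof -
  assume "n \<ge> 1"
  then obtain n' where n: "n = Suc n'" by (cases n) auto
  have "[a..<a + Suc n] = a # [Suc a..<a + Suc n]" by (simp add: upt_rec)
  moreover have "[Suc a..<a + Suc n] = Suc a # [Suc (Suc a)..<a + Suc n]" using n by (simp add: upt_rec)
  ultimately show ?thesis by simp
qed

lemma path_exists: "\<exists>tt F. pathP a (a + Suc n) tt F (pconcat (map axis [a..<a + Suc n]))"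
proof (induction n arbitrary: a)
  case 0
  then show ?case using path_base[of a] by auto
next
  case (Suc n)
  obtain tt F where P: "pathP (Suc a) (Suc a + Suc n) tt F (pconcat (map axis [Suc a..<Suc a + Suc n]))"
    using Suc.IH[of "Suc a"] by auto
  have e2: "Suc a + Suc n = a + Suc (Suc n)" by simp
  have P': "pathP (Suc a) (a + Suc (Suc n)) tt F (pconcat (map axis [Suc a..<a + Suc (Suc n)]))"
    using P unfolding e2 .
  have eq: "pconcat (map axis [a..<a + Suc (Suc n)]) = pcat (axis a) (pconcat (map axis [Suc a..<a + Suc (Suc n)]))"
    by (rule pconcat_upt) simp
  have ab: "Suc a < a + Suc (Suc n)" by simp
  show ?case unfolding eq using path_step[OF P' ab] by blast
qed



lemma negl_F:
  assumes "finite F"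
  shows "negligible {x :: real \<times> real. fst x \<in> F \<or> snd x \<in> F}"
proof -
  have "{x :: real \<times> real. fst x \<in> F \<or> snd x \<in> F} = \<Union>((\<lambda>c. {x. fst x = c}) ` F) \<union> \<Union>((\<lambda>c. {x. snd x = c}) ` F)"
    by auto
  moreover have "negligible (\<Union>((\<lambda>c. {x :: real \<times> real. fst x = c}) ` F))"
    using assms negl_line1 by (intro negligible_Union) auto
  moreover have "negligible (\<Union>((\<lambda>c. {x :: real \<times> real. snd x = c}) ` F))"
    using assms negl_line2 by (intro negligible_Union) auto
  ultimately show ?thesis by auto
qed

lemma Dv_int:
  assumes P: "pathP a b tt F X" and ab: "a < b"
  shows "((\<lambda>(s,t). Dv a b tt c1 s * Dv a b tt c2 t) has_integral
     ((if a \<le> c1 \<and> c1 < b then 1 else 0) * (if a \<le> c2 \<and> c2 < b then 1 else 0) * sval c1 c2)) Tri"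
proof -
  have t0: "tt 0 = 0" and t1: "tt (b - a) = 1" and tm: "\<forall>l < b - a. tt l < tt (Suc l)"
    using P unfolding pathP_def by auto
  have mono: "tt i \<le> tt j" if "i \<le> j" "j \<le> b - a" for i j using mono_tt[OF tm that] .
  show ?thesis
  proof (cases "a \<le> c1 \<and> c1 < b \<and> a \<le> c2 \<and> c2 < b")
    case False
    then have "(\<lambda>(s,t). Dv a b tt c1 s * Dv a b tt c2 t) = (\<lambda>x. 0)"
      by (auto simp: Dv_def fun_eq_iff)
    then show ?thesis using False by auto
  next
    case True
    let ?p1 = "tt (c1 - a)" let ?q1 = "tt (Suc (c1 - a))"
    let ?p2 = "tt (c2 - a)" let ?q2 = "tt (Suc (c2 - a))"
    have f: "(\<lambda>(s,t). Dv a b tt c1 s * Dv a b tt c2 t) =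
      (\<lambda>(s,t). (if ?p1 < s \<and> s < ?q1 then 1 / (?q1 - ?p1) else 0) * (if ?p2 < t \<and> t < ?q2 then 1 / (?q2 - ?p2) else 0))"
      using True by (auto simp: Dv_def fun_eq_iff)
    have lt1: "?p1 < ?q1" and lt2: "?p2 < ?q2" using tm True by auto
    have nn1: "0 \<le> ?p1" using mono[of 0 "c1 - a"] t0 True by auto
    have nn2: "0 \<le> ?p2" using mono[of 0 "c2 - a"] t0 True by auto
    have le1: "?q1 \<le> 1" using mono[of "Suc (c1 - a)" "b - a"] t1 True by auto
    have le2: "?q2 \<le> 1" using mono[of "Suc (c2 - a)" "b - a"] t1 True by auto
    consider "c1 < c2" | "c1 = c2" | "c2 < c1" by arith
    then show ?thesis
    proof cases
      case 1
      have "?q1 \<le> ?p2" using mono[of "Suc (c1 - a)" "c2 - a"] True 1 by auto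
      then have "((\<lambda>(s,t). (if ?p1 < s \<and> s < ?q1 then 1 / (?q1 - ?p1) else 0) * (if ?p2 < t \<and> t < ?q2 then 1 / (?q2 - ?p2) else 0))
        has_integral (1 / (?q1 - ?p1) * (1 / (?q2 - ?p2)) * (?q1 - ?p1) * (?q2 - ?p2))) Tri"
        using nn1 lt1 lt2 le2 by (intro I1) auto
      then show ?thesis unfolding f using True 1 lt1 lt2 by (simp add: sval_def)
    next
      case 2
      have "((\<lambda>(s,t). (if ?p1 < s \<and> s < ?q1 then 1 / (?q1 - ?p1) else 0) * (if ?p1 < t \<and> t < ?q1 then 1 / (?q1 - ?p1) else 0))
        has_integral (1 / (?q1 - ?p1) * (1 / (?q1 - ?p1)) * (?q1 - ?p1)^2 / 2)) Tri"
        using nn1 lt1 le1 by (intro I3) auto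
      then show ?thesis unfolding f unfolding 2[symmetric] using True lt1 by (simp add: sval_def power2_eq_square)
    next
      case 3
      have "?q2 \<le> ?p1" using mono[of "Suc (c2 - a)" "c1 - a"] True 3 by auto
      then have "((\<lambda>(s,t). (if ?p1 < s \<and> s < ?q1 then 1 / (?q1 - ?p1) else 0) * (if ?p2 < t \<and> t < ?q2 then 1 / (?q2 - ?p2) else 0))
        has_integral 0) Tri"
        by (intro I2) auto
      then show ?thesis unfolding f using True 3 by (simp add: sval_def)
    qed
  qed
qed

lemma sig_path:
  assumes P: "pathP a b tt F X" and ab: "a < b"
  shows "sig2 m X = (1, vec m (\<lambda>i. if a \<le> Suc i \<and> Suc i < b then 1 else 0),
    mat m m (\<lambda>(i,j). (if a \<le> Suc i \<and> Suc i < b then 1 else 0) * (if a \<le> Suc j \<and> Suc j < b then 1 else 0) * sval (Suc i) (Suc j)))"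
proof -
  have fF: "finite F" and dX: "\<forall>s\<in>{0<..<1} - F. \<forall>c. ((\<lambda>r. X r c) has_real_derivative Dv a b tt c s) (at s)"
    and X0: "\<forall>c. X 0 c = 0" and X1: "\<forall>c. X 1 c = (if a \<le> c \<and> c < b then 1 else 0)"
    using P unfolding pathP_def by auto
  have vd: "vector_derivative (\<lambda>r. X r c) (at s) = Dv a b tt c s" if "s \<in> {0<..<1} - F" for s c
    using dX that by (auto intro!: vector_derivative_at simp: has_real_derivative_iff_has_vector_derivative[symmetric])
  have I: "integral {(s, t). 0 < s \<and> s < t \<and> t < 1}
        (\<lambda>(s, t). vector_derivative (\<lambda>r. X r c1) (at s) * vector_derivative (\<lambda>r. X r c2) (at t))
     = (if a \<le> c1 \<and> c1 < b then 1 else 0) * (if a \<le> c2 \<and> c2 < b then 1 else 0) * sval c1 c2" for c1 c2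
  proof -
    have "integral Tri (\<lambda>(s, t). vector_derivative (\<lambda>r. X r c1) (at s) * vector_derivative (\<lambda>r. X r c2) (at t))
       = integral Tri (\<lambda>(s,t). Dv a b tt c1 s * Dv a b tt c2 t)"
      by (rule integral_spike[OF negl_F[OF fF]]) (auto simp: Tri_def vd)
    also have "\<dots> = (if a \<le> c1 \<and> c1 < b then 1 else 0) * (if a \<le> c2 \<and> c2 < b then 1 else 0) * sval c1 c2"
      by (rule integral_unique[OF Dv_int[OF P ab]])
    finally show ?thesis unfolding Tri_def .
  qed
  show ?thesis unfolding sig2_def using X0 X1 I by (auto intro!: eq_matI)
qed

lemma sval_Suc: "sval (Suc i) (Suc j) = sval i j" unfolding sval_def by auto

lemma sig_Ax_proof:
  assumes pos: "\<forall>a\<in>set \<alpha>. a > 0" and j: "j < length \<alpha>"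
  shows "sig2 (sum_list \<alpha>) (Ax \<alpha> (Suc j)) = (1, Vj \<alpha> j, Sj \<alpha> j)"
proof -
  let ?s = "sum_list (take j \<alpha>)"
  obtain n where n: "\<alpha> ! j = Suc n" using pos j by (metis gr0_implies_Suc nth_mem)
  have ax: "Ax \<alpha> (Suc j) = pconcat (map axis [Suc ?s..<Suc ?s + Suc n])"
    unfolding Ax_def Let_def using n by simp
  obtain tt F where P: "pathP (Suc ?s) (Suc ?s + Suc n) tt F (pconcat (map axis [Suc ?s..<Suc ?s + Suc n]))"
    using path_exists by blast
  have bxe: "bx \<alpha> j i = (if Suc ?s \<le> Suc i \<and> Suc i < Suc ?s + Suc n then 1 else 0)" if i: "i < sum_list \<alpha>" for i
    using blk_take[OF j i] n unfolding bx_def by auto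
  have sp: "sig2 (sum_list \<alpha>) (pconcat (map axis [Suc ?s..<Suc ?s + Suc n])) = (1, vec (sum_list \<alpha>) (\<lambda>i. if Suc ?s \<le> Suc i \<and> Suc i < Suc ?s + Suc n then 1 else 0),
    mat (sum_list \<alpha>) (sum_list \<alpha>) (\<lambda>(i,j). (if Suc ?s \<le> Suc i \<and> Suc i < Suc ?s + Suc n then 1 else 0) * (if Suc ?s \<le> Suc j \<and> Suc j < Suc ?s + Suc n then 1 else 0) * sval (Suc i) (Suc j)))"
    by (rule sig_path[OF P]) simp
  show ?thesis unfolding ax sp
    by (auto simp: Vj_def Sj_def bxe sval_Suc intro!: eq_vecI eq_matI)
qed


lemma sig_Ax:
  assumes "\<forall>a\<in>set \<alpha>. a > 0" "j < length \<alpha>"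
  shows "sig2 (sum_list \<alpha>) (Ax \<alpha> (Suc j)) = (1, Vj \<alpha> j, Sj \<alpha> j)"
  by (rule sig_Ax_proof[OF assms])

lemma sum_list_map_upt0: "sum_list (map f [0..<N]) = (\<Sum>j<N. f j)"
  using sum_set_upt_conv_sum_list_nat[of f 0 N] by (simp add: atLeast0LessThan)

definition Lt :: "nat list \<Rightarrow> real vec \<Rightarrow> real mat \<Rightarrow> nat \<Rightarrow> nat \<Rightarrow> nat \<Rightarrow> real" where
  "Lt \<alpha> w A j a b = (- A $$ (a,b) + w $ a * w $ b + bx \<alpha> j a * bx \<alpha> j b * sval a b - w $ a * bx \<alpha> j b)
     - (bx \<alpha> j a - w $ a) * (bx \<alpha> j b - w $ b) / 2"

lemma cond_calc:
  assumes pos: "\<forall>a\<in>set \<alpha>. a > 0" and m: "m = sum_list \<alpha>" and N: "N = length \<alpha>"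
    and w: "w \<in> carrier_vec m" and A: "A \<in> carrier_mat m m" and sym: "A + transpose_mat A = outer m w w"
  shows "tsum m (map (\<lambda>x. tlog m (tmult m (tinv m (1, w, A)) x)) (map (\<lambda>i. sig2 m (Ax \<alpha> i)) [1..<N+1]))
     = (0, vec m (\<lambda>a. \<Sum>j<N. bx \<alpha> j a - w $ a), mat m m (\<lambda>(a,b). \<Sum>j<N. Lt \<alpha> w A j a b))"
proof -
  have l1: "[1..<N+1] = map Suc [0..<N]" by (simp add: map_Suc_upt)
  let ?t = "\<lambda>j. (0::real, - w + Vj \<alpha> j, mat m m (\<lambda>(a,b). Lt \<alpha> w A j a b))"
  have each: "tlog m (tmult m (tinv m (1, w, A)) (sig2 m (Ax \<alpha> (Suc j)))) = ?t j" if j: "j < N" for j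
  proof -
    have sg: "sig2 m (Ax \<alpha> (Suc j)) = (1, Vj \<alpha> j, Sj \<alpha> j)" using sig_Ax[OF pos, of j] j N m by simp
    have Vc: "Vj \<alpha> j \<in> carrier_vec m" and Sc: "Sj \<alpha> j \<in> carrier_mat m m" unfolding Vj_def Sj_def m by auto
    have "tmult m (tinv m (1, w, A)) (sig2 m (Ax \<alpha> (Suc j))) = (1, - w + Vj \<alpha> j, - A + outer m w w + Sj \<alpha> j + outer m (- w) (Vj \<alpha> j))"
      unfolding tinv_simp[OF w A sym] sg
      by (rule tmult_one) (use w A Vc Sc in auto)
    also have "tlog m \<dots> = ?t j"
      by (subst tlog_simp) (use w A Vc Sc in \<open>auto simp: Lt_def Vj_def Sj_def m intro!: eq_matI\<close>)
    finally show ?thesis .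
  qed
  have "map (\<lambda>x. tlog m (tmult m (tinv m (1, w, A)) x)) (map (\<lambda>i. sig2 m (Ax \<alpha> i)) [1..<N+1]) = map ?t [0..<N]"
    unfolding l1 using each by auto
  moreover have "tsum m (map ?t [0..<N]) = (0, vec m (\<lambda>a. \<Sum>j<N. bx \<alpha> j a - w $ a), mat m m (\<lambda>(a,b). \<Sum>j<N. Lt \<alpha> w A j a b))"
    by (subst tsum_simp) (use w in \<open>auto simp: sum_list_map_upt0 Vj_def m intro!: eq_vecI eq_matI sum.cong\<close>)
  ultimately show ?thesis by simp
qed



lemma sumL:
  assumes a: "a < sum_list \<alpha>" and b: "b < sum_list \<alpha>"
  shows "(\<Sum>j<length \<alpha>. Lt \<alpha> w A j a b) = real (length \<alpha>) * (- A $$ (a,b) + w $ a * w $ b / 2)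
     + (if blk \<alpha> a = blk \<alpha> b then sval a b - 1/2 else 0) + w $ b / 2 - w $ a / 2"
proof -
  have "(\<Sum>j<length \<alpha>. Lt \<alpha> w A j a b) = (\<Sum>j<length \<alpha>. (- A $$ (a,b) + w $ a * w $ b / 2)
      + (bx \<alpha> j a * bx \<alpha> j b) * (sval a b - 1/2) + (w $ b / 2) * bx \<alpha> j a - (w $ a / 2) * bx \<alpha> j b)"
    by (rule sum.cong) (auto simp: Lt_def field_simps)
  also have "\<dots> = real (length \<alpha>) * (- A $$ (a,b) + w $ a * w $ b / 2)
     + (\<Sum>j<length \<alpha>. bx \<alpha> j a * bx \<alpha> j b) * (sval a b - 1/2) + (w $ b / 2) * (\<Sum>j<length \<alpha>. bx \<alpha> j a)
     - (w $ a / 2) * (\<Sum>j<length \<alpha>. bx \<alpha> j b)"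
    by (simp add: sum.distrib sum_subtractf sum_distrib_left sum_distrib_right)
  also have "\<dots> = real (length \<alpha>) * (- A $$ (a,b) + w $ a * w $ b / 2)
     + (if blk \<alpha> a = blk \<alpha> b then sval a b - 1/2 else 0) + w $ b / 2 - w $ a / 2"
    using F1[OF a] F1[OF b] F2[OF a, of b] by simp
  finally show ?thesis .
qed

lemma sval_K:
  assumes a: "a < sum_list \<alpha>" and b: "b < sum_list \<alpha>"
  shows "(if blk \<alpha> a = blk \<alpha> b then sval a b - 1/2 else 0) = Kmat \<alpha> $$ (a,b) / 2"
  using Kmat_index[OF a b] by (auto simp: sval_def)

lemma Kmat_antisym:
  assumes a: "a < sum_list \<alpha>" and b: "b < sum_list \<alpha>"
  shows "Kmat \<alpha> $$ (b,a) = - Kmat \<alpha> $$ (a,b)"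
  using Kmat_index[OF a b] Kmat_index[OF b a] by auto

definition w0 :: "nat list \<Rightarrow> real vec" where "w0 \<alpha> = vec (sum_list \<alpha>) (\<lambda>_. 1 / real (length \<alpha>))"
definition A0 :: "nat list \<Rightarrow> real mat" where
  "A0 \<alpha> = mat (sum_list \<alpha>) (sum_list \<alpha>) (\<lambda>(a,b). (Kmat \<alpha> $$ (a,b) + 1 / real (length \<alpha>)) / (2 * real (length \<alpha>)))"

lemma bary_val:
  assumes pos: "\<forall>a\<in>set \<alpha>. a > 0" and ne: "\<alpha> \<noteq> []"
  shows "bary (sum_list \<alpha>) (map (\<lambda>i. sig2 (sum_list \<alpha>) (Ax \<alpha> i)) [1 ..< length \<alpha> + 1]) = (1, w0 \<alpha>, A0 \<alpha>)"
  unfolding bary_def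
proof (rule the_equality)
  let ?m = "sum_list \<alpha>" let ?N = "length \<alpha>"
  have Npos: "real ?N > 0" using ne by auto
  have w0c: "w0 \<alpha> \<in> carrier_vec ?m" and A0c: "A0 \<alpha> \<in> carrier_mat ?m ?m" unfolding w0_def A0_def by auto
  have sym0: "A0 \<alpha> + transpose_mat (A0 \<alpha>) = outer ?m (w0 \<alpha>) (w0 \<alpha>)"
  proof (rule eq_matI)
    fix i j assume "i < dim_row (outer ?m (w0 \<alpha>) (w0 \<alpha>))" "j < dim_col (outer ?m (w0 \<alpha>) (w0 \<alpha>))"
    then have i: "i < ?m" and j: "j < ?m" by auto
    show "(A0 \<alpha> + transpose_mat (A0 \<alpha>)) $$ (i,j) = outer ?m (w0 \<alpha>) (w0 \<alpha>) $$ (i,j)"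
      using i j Kmat_antisym[OF i j] Npos by (auto simp: A0_def w0_def field_simps)
  qed (auto simp: A0_def)
  have g0: "(1, w0 \<alpha>, A0 \<alpha>) \<in> tgroup ?m" unfolding tgroup_iff using w0c A0c sym0 by auto
  show "(1, w0 \<alpha>, A0 \<alpha>) \<in> tgroup ?m \<and>
    tsum ?m (map (\<lambda>x. tlog ?m (tmult ?m (tinv ?m (1, w0 \<alpha>, A0 \<alpha>)) x)) (map (\<lambda>i. sig2 ?m (Ax \<alpha> i)) [1..<?N + 1])) = tzero ?m"
  proof (intro conjI g0)
    have v: "vec ?m (\<lambda>a. \<Sum>j<?N. bx \<alpha> j a - w0 \<alpha> $ a) = 0\<^sub>v ?m"
      using F1 Npos by (auto simp: w0_def sum_subtractf intro!: eq_vecI)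
    have M: "mat ?m ?m (\<lambda>(a,b). \<Sum>j<?N. Lt \<alpha> (w0 \<alpha>) (A0 \<alpha>) j a b) = 0\<^sub>m ?m ?m"
    proof (rule eq_matI)
      fix a b assume "a < dim_row (0\<^sub>m ?m ?m)" "b < dim_col (0\<^sub>m ?m ?m)"
      then have a: "a < ?m" and b: "b < ?m" by auto
      show "mat ?m ?m (\<lambda>(a,b). \<Sum>j<?N. Lt \<alpha> (w0 \<alpha>) (A0 \<alpha>) j a b) $$ (a,b) = 0\<^sub>m ?m ?m $$ (a,b)"
        using a b Npos by (simp add: sumL sval_K A0_def w0_def field_simps)
    qed auto
    show "tsum ?m (map (\<lambda>x. tlog ?m (tmult ?m (tinv ?m (1, w0 \<alpha>, A0 \<alpha>)) x)) (map (\<lambda>i. sig2 ?m (Ax \<alpha> i)) [1..<?N + 1])) = tzero ?m"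
      unfolding cond_calc[OF pos refl refl w0c A0c sym0] v M tzero_def by simp
  qed
next
  let ?m = "sum_list \<alpha>" let ?N = "length \<alpha>"
  have Npos: "real ?N > 0" using ne by auto
  fix g assume g: "g \<in> tgroup ?m \<and>
    tsum ?m (map (\<lambda>x. tlog ?m (tmult ?m (tinv ?m g) x)) (map (\<lambda>i. sig2 ?m (Ax \<alpha> i)) [1..<?N + 1])) = tzero ?m"
  then obtain w A where gg: "g = (1, w, A)" and w: "w \<in> carrier_vec ?m" and A: "A \<in> carrier_mat ?m ?m"
    and sym: "A + transpose_mat A = outer ?m w w" unfolding tgroup_iff by auto
  have eq: "(0::real, vec ?m (\<lambda>a. \<Sum>j<?N. bx \<alpha> j a - w $ a), mat ?m ?m (\<lambda>(a,b). \<Sum>j<?N. Lt \<alpha> w A j a b)) = (0, 0\<^sub>v ?m, 0\<^sub>m ?m ?m)"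
    using g unfolding gg cond_calc[OF pos refl refl w A sym] tzero_def by simp
  have wa: "w $ a = 1 / real ?N" if a: "a < ?m" for a
  proof -
    have "vec ?m (\<lambda>a. \<Sum>j<?N. bx \<alpha> j a - w $ a) $ a = 0\<^sub>v ?m $ a" using eq by simp
    then have "1 - real ?N * w $ a = 0" using a F1[OF a] by (simp add: sum_subtractf)
    then show ?thesis using Npos by (simp add: field_simps)
  qed
  have ww: "w = w0 \<alpha>" by (rule eq_vecI) (use w wa in \<open>auto simp: w0_def\<close>)
  have AA: "A = A0 \<alpha>"
  proof (rule eq_matI)
    fix a b assume "a < dim_row (A0 \<alpha>)" "b < dim_col (A0 \<alpha>)"
    then have a: "a < ?m" and b: "b < ?m" by (auto simp: A0_def)
    have "mat ?m ?m (\<lambda>(a,b). \<Sum>j<?N. Lt \<alpha> w A j a b) $$ (a,b) = 0\<^sub>m ?m ?m $$ (a,b)" using eq by simp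
    then have "real ?N * (- A $$ (a,b) + w $ a * w $ b / 2) + Kmat \<alpha> $$ (a,b) / 2 + w $ b / 2 - w $ a / 2 = 0"
      using a b by (simp add: sumL sval_K)
    then show "A $$ (a,b) = A0 \<alpha> $$ (a,b)"
      using a b Npos wa[OF a] wa[OF b] by (simp add: A0_def field_simps)
  qed (use A in \<open>auto simp: A0_def\<close>)
  show "g = (1, w0 \<alpha>, A0 \<alpha>)" using gg ww AA by simp
qed



lemma W_A0:
  assumes pos: "\<forall>a\<in>set \<alpha>. a > 0" and ne: "\<alpha> \<noteq> []"
  shows "W \<alpha> = A0 \<alpha>"
  unfolding W_def bary_val[OF pos ne] by simp

lemma smult_smult_mat': "a \<cdot>\<^sub>m (b \<cdot>\<^sub>m (A :: real mat)) = (a * b) \<cdot>\<^sub>m A"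
  by (rule eq_matI) auto
lemma one_smult_mat': "(1::real) \<cdot>\<^sub>m A = A"
  by (rule eq_matI) auto

lemma scale_congruent:
  assumes M: "M \<in> carrier_mat n n" and d: "d \<noteq> 0"
  shows "congruent M ((d * d) \<cdot>\<^sub>m M)"
proof -
  let ?P = "d \<cdot>\<^sub>m 1\<^sub>m n"
  have e1: "?P * ((1/d) \<cdot>\<^sub>m 1\<^sub>m n) = 1\<^sub>m n"
    using mult_smult_assoc_mat[of "1\<^sub>m n" n n "(1/d) \<cdot>\<^sub>m 1\<^sub>m n" n d] mult_smult_distrib[of "1\<^sub>m n" n n "1\<^sub>m n" n "1/d"] d
    by (simp add: smult_smult_mat' one_smult_mat')
  have e2: "((1/d) \<cdot>\<^sub>m 1\<^sub>m n) * ?P = 1\<^sub>m n"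
    using mult_smult_assoc_mat[of "1\<^sub>m n" n n "d \<cdot>\<^sub>m 1\<^sub>m n" n "1/d"] mult_smult_distrib[of "1\<^sub>m n" n n "1\<^sub>m n" n d] d
    by (simp add: smult_smult_mat' one_smult_mat')
  have inv: "invertible_mat ?P"
    by (rule invertible_intro[OF _ _ e1 e2]) auto
  have t: "transpose_mat ?P = ?P" by (rule eq_matI) auto
  have "?P * M * transpose_mat ?P = (d * d) \<cdot>\<^sub>m M"
    unfolding t using M mult_smult_assoc_mat[of "1\<^sub>m n" n n M n d]
      mult_smult_assoc_mat[of M n n "1\<^sub>m n" n d] mult_smult_distrib[of "d \<cdot>\<^sub>m M" n n "1\<^sub>m n" n d]
    by (simp add: smult_smult_mat' one_smult_mat')
  then show ?thesis using M inv by (intro congruentI[of _ n ?P]) auto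
qed

lemma A0_Mc:
  assumes ne: "\<alpha> \<noteq> []"
  shows "(2 * real (length \<alpha>)) \<cdot>\<^sub>m A0 \<alpha> = Mc (1 / sqrt (real (length \<alpha>))) \<alpha>"
proof -
  have Npos: "real (length \<alpha>) > 0" using ne by auto
  show ?thesis
    using Npos by (auto intro!: eq_matI simp: A0_def Mc_def vc_def field_simps real_sqrt_divide)
qed

lemma W_NF:
  assumes pos: "\<forall>a\<in>set \<alpha>. a > 0" and ne: "\<alpha> \<noteq> []"
  shows "goodNF \<alpha> (W \<alpha>)"
proof -
  let ?N = "real (length \<alpha>)"
  have Npos: "?N > 0" using ne by auto
  let ?c = "1 / sqrt ?N"
  have c: "?c \<noteq> 0" using Npos by simp
  have d: "sqrt (2 * ?N) \<noteq> 0" using Npos by simp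
  have 1: "congruent (W \<alpha>) (Mc ?c \<alpha>)"
    using scale_congruent[of "A0 \<alpha>" "sum_list \<alpha>", OF _ d] A0_Mc[OF ne] Npos unfolding W_A0[OF pos ne]
    by (simp add: A0_def)
  have 2: "goodNF \<alpha> (Mc ?c \<alpha>)" by (rule Mc_NF[OF pos ne c])
  show ?thesis using 2 congruent_trans[OF 1] unfolding goodNF_def by (auto split: if_splits)
qed

theorem proposition7p10:
  fixes m :: nat and \<alpha> :: "nat list"
  assumes "m \<ge> 1"
    and "\<forall>a \<in> set \<alpha>. a > 0"
    and "sum_list \<alpha> = m"
  shows "if (\<forall>a \<in> set \<alpha>. even a)
         then congruent (W \<alpha>) (dsum Gamma2 (dpow H2m ((m - 2) div 2)))
         else congruent (W \<alpha>) (dsum (1\<^sub>m 1) (dsum (dpow H2m ((m - nodd \<alpha>) div 2)) (0\<^sub>m (nodd \<alpha> - 1) (nodd \<alpha> - 1))))"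
proof -
  have ne: "\<alpha> \<noteq> []" using assms by auto
  show ?thesis using W_NF[OF assms(2) ne, unfolded goodNF_def NFe_def NFo_def assms(3)] .
qed




end
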